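(* Let $\bm\sigma=\sigma_1\bm e_1+\dots+\sigma_r\bm e_r\in\mathbb{Z}^r$ be a changemaker vector with $\sigma_r\ge2$ and let $L=\langle\bm\sigma\rangle^\perp\subseteq\mathbb{Z}^r$. Then any obtuse superbase for $L$ contains at most one reducible vector. In particular, any obtuse superbase for $L$ contains a basis of $L$ consisting of irreducible vectors.
   Context: $\mathbb{Z}^r$ has the standard pairing. A changemaker vector is $\bm\sigma=\sum\sigma_i\bm e_i$ (in some orthonormal basis) with $\sigma_1=1$ and $\sigma_{i-1}\le\sigma_i\le1+\sigma_1+\dots+\sigma_{i-1}$. An obtuse superbase of a rank-$k$ lattice $L$ is a spanning set $\{v_0,\dots,v_k\}$ with $v_i\cdot v_j\le 0$ for $i\ne j$ and $\sum v_i=0$. A non-zero $v\in L$ is irreducible if whenever $v=x+y$ with $x,y\in L$ non-zero we have $x\cdot y\le -1$; otherwise it is reducible. *)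

theory Defs
  imports Main
begin

text \<open>Vectors of Z^r are represented as functions nat => int supported on {0..<r};
  coordinate i (0-based) corresponds to e_(i+1).\<close>

definition zvec :: "nat \<Rightarrow> (nat \<Rightarrow> int) set" where
  "zvec r = {v. \<forall>i\<ge>r. v i = 0}"

definition dot :: "nat \<Rightarrow> (nat \<Rightarrow> int) \<Rightarrow> (nat \<Rightarrow> int) \<Rightarrow> int" where
  "dot r v w = (\<Sum>i<r. v i * w i)"

definition changemaker :: "nat \<Rightarrow> (nat \<Rightarrow> int) \<Rightarrow> bool" where
  "changemaker r \<sigma> \<longleftrightarrow> r \<ge> 1 \<and> \<sigma> \<in> zvec r \<and> \<sigma> 0 = 1 \<and>
     (\<forall>i. 1 \<le> i \<and> i < r \<longrightarrow> \<sigma> (i - 1) \<le> \<sigma> i \<and> \<sigma> i \<le> 1 + (\<Sum>j<i. \<sigma> j))"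

definition perp_lattice :: "nat \<Rightarrow> (nat \<Rightarrow> int) \<Rightarrow> (nat \<Rightarrow> int) set" where
  "perp_lattice r \<sigma> = {v \<in> zvec r. dot r v \<sigma> = 0}"

definition lincomb :: "nat set \<Rightarrow> (nat \<Rightarrow> int) \<Rightarrow> (nat \<Rightarrow> nat \<Rightarrow> int) \<Rightarrow> nat \<Rightarrow> int" where
  "lincomb I c v = (\<lambda>t. \<Sum>i\<in>I. c i * v i t)"

definition spans :: "(nat \<Rightarrow> int) set \<Rightarrow> nat set \<Rightarrow> (nat \<Rightarrow> nat \<Rightarrow> int) \<Rightarrow> bool" where
  "spans L I v \<longleftrightarrow> (\<forall>i\<in>I. v i \<in> L) \<and> (\<forall>w\<in>L. \<exists>c. w = lincomb I c v)"

definition lin_indep :: "nat set \<Rightarrow> (nat \<Rightarrow> nat \<Rightarrow> int) \<Rightarrow> bool" where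
  "lin_indep I v \<longleftrightarrow> (\<forall>c. lincomb I c v = (\<lambda>_. 0) \<longrightarrow> (\<forall>i\<in>I. c i = 0))"

definition is_basis :: "(nat \<Rightarrow> int) set \<Rightarrow> nat set \<Rightarrow> (nat \<Rightarrow> nat \<Rightarrow> int) \<Rightarrow> bool" where
  "is_basis L I v \<longleftrightarrow> spans L I v \<and> lin_indep I v"

definition obtuse_superbase ::
  "nat \<Rightarrow> (nat \<Rightarrow> int) set \<Rightarrow> nat \<Rightarrow> (nat \<Rightarrow> nat \<Rightarrow> int) \<Rightarrow> bool" where
  "obtuse_superbase r L k v \<longleftrightarrow> spans L {..k} v \<and>
     (\<forall>i\<le>k. \<forall>j\<le>k. i \<noteq> j \<longrightarrow> dot r (v i) (v j) \<le> 0) \<and>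
     lincomb {..k} (\<lambda>_. 1) v = (\<lambda>_. 0)"

definition irreducible_vec :: "nat \<Rightarrow> (nat \<Rightarrow> int) set \<Rightarrow> (nat \<Rightarrow> int) \<Rightarrow> bool" where
  "irreducible_vec r L v \<longleftrightarrow> v \<in> L \<and> v \<noteq> (\<lambda>_. 0) \<and>
     (\<forall>x\<in>L. \<forall>y\<in>L. x \<noteq> (\<lambda>_. 0) \<and> y \<noteq> (\<lambda>_. 0) \<and> v = (\<lambda>t. x t + y t)
        \<longrightarrow> dot r x y \<le> -1)"

definition reducible_vec :: "nat \<Rightarrow> (nat \<Rightarrow> int) set \<Rightarrow> (nat \<Rightarrow> int) \<Rightarrow> bool" where
  "reducible_vec r L v \<longleftrightarrow> v \<in> L \<and> v \<noteq> (\<lambda>_. 0) \<and> \<not> irreducible_vec r L v"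

end

theory Submission
  imports Defs "HOL-Library.Function_Algebras" Complex_Main
begin

lemma dot_sym: "dot r x y = dot r y x"
  unfolding dot_def by (simp add: mult.commute)

lemma dot_lincomb_right:
  "dot r x (lincomb I c g) = (\<Sum>i\<in>I. c i * dot r x (g i))"
  unfolding dot_def lincomb_def
  by (simp add: sum_distrib_left sum_distrib_right mult_ac sum.swap[of _ I])

lemma dot_lincomb_left:
  "dot r (lincomb I c g) x = (\<Sum>i\<in>I. c i * dot r (g i) x)"
  using dot_lincomb_right[of r x I c g] by (simp add: dot_sym)

lemma dot_add_left: "dot r (\<lambda>t. x t + y t) z = dot r x z + dot r y z"
  unfolding dot_def by (simp add: algebra_simps sum.distrib)

lemma dot_diff_left: "dot r (\<lambda>t. x t - y t) z = dot r x z - dot r y z"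
  unfolding dot_def by (simp add: algebra_simps sum_subtractf)

lemma dot_scale_left: "dot r (\<lambda>t. a * x t) z = a * dot r x z"
  unfolding dot_def by (simp add: algebra_simps sum_distrib_left)

lemma dot_self_zero:
  assumes "x \<in> zvec r" "dot r x x = 0" shows "x = (\<lambda>_. 0)"
proof
  fix u show "x u = 0"
  proof (cases "u < r")
    case True
    have "(\<Sum>i<r. x i * x i) = 0" using assms(2) by (simp add: dot_def)
    then have "\<forall>i\<in>{..<r}. x i * x i = 0"
      by (subst sum_nonneg_eq_0_iff[symmetric]) auto
    then show ?thesis using True by auto
  next
    case False then show ?thesis using assms(1) by (simp add: zvec_def)
  qed
qed

lemma lincomb_add: "(\<lambda>t. lincomb I a g t + lincomb I b g t) = lincomb I (\<lambda>i. a i + b i) g"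
  unfolding lincomb_def by (simp add: algebra_simps sum.distrib)

lemma lincomb_diff: "(\<lambda>t. lincomb I a g t - lincomb I b g t) = lincomb I (\<lambda>i. a i - b i) g"
  unfolding lincomb_def by (simp add: algebra_simps sum_subtractf)

lemma lincomb_scale: "(\<lambda>t. k * lincomb I a g t) = lincomb I (\<lambda>i. k * a i) g"
  unfolding lincomb_def by (simp add: algebra_simps sum_distrib_left)

lemma lincomb_cong: "(\<And>i. i \<in> I \<Longrightarrow> a i = b i) \<Longrightarrow> lincomb I a g = lincomb I b g"
  unfolding lincomb_def by auto

lemma lincomb_zero_coeff: "lincomb I (\<lambda>_. 0) g = (\<lambda>_. 0)"
  unfolding lincomb_def by simp

lemma lincomb_insert:
  "finite I \<Longrightarrow> i \<notin> I \<Longrightarrow> lincomb (insert i I) c g = (\<lambda>t. c i * g i t + lincomb I c g t)"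
  unfolding lincomb_def by simp

lemma lincomb_in_zvec: "(\<And>i. i \<in> I \<Longrightarrow> g i \<in> zvec r) \<Longrightarrow> lincomb I c g \<in> zvec r"
  unfolding lincomb_def zvec_def by auto

lemma lincomb_in_perp:
  assumes "finite I" "\<And>i. i \<in> I \<Longrightarrow> g i \<in> perp_lattice r s"
  shows "lincomb I c g \<in> perp_lattice r s"
proof -
  have "lincomb I c g \<in> zvec r" using assms lincomb_in_zvec[of I g r c] by (auto simp: perp_lattice_def)
  moreover have "dot r (lincomb I c g) s = 0"
    using assms by (simp add: dot_lincomb_left perp_lattice_def)
  ultimately show ?thesis by (simp add: perp_lattice_def)
qed



locale CM =
  fixes r :: nat and \<sigma> :: "nat \<Rightarrow> int"
  assumes cm: "changemaker r \<sigma>" and r2: "2 \<le> r"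
begin

abbreviation "LL \<equiv> perp_lattice r \<sigma>"

lemma sig0: "\<sigma> 0 = 1" using cm by (simp add: changemaker_def)

lemma sig_step: "1 \<le> i \<Longrightarrow> i < r \<Longrightarrow> \<sigma> (i - 1) \<le> \<sigma> i \<and> \<sigma> i \<le> 1 + (\<Sum>j<i. \<sigma> j)"
  using cm by (simp add: changemaker_def)

lemma sig_pos: "s < r \<Longrightarrow> 1 \<le> \<sigma> s"
proof (induction s)
  case 0 then show ?case by (simp add: sig0)
next
  case (Suc s) then show ?case using sig_step[of "Suc s"] by auto
qed

lemma sig_mono: "s \<le> t \<Longrightarrow> t < r \<Longrightarrow> \<sigma> s \<le> \<sigma> t"
proof (induction t)
  case 0 then show ?case by simp
next
  case (Suc t)
  show ?case
  proof (cases "s = Suc t")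
    case True then show ?thesis by simp
  next
    case False then show ?thesis using Suc sig_step[of "Suc t"] by auto
  qed
qed

lemma sig_zvec: "\<sigma> \<in> zvec r" using cm by (simp add: changemaker_def)

lemma subset_sum:
  "t \<le> r \<Longrightarrow> 0 \<le> m \<Longrightarrow> m \<le> (\<Sum>s<t. \<sigma> s) \<Longrightarrow> \<exists>S. S \<subseteq> {..<t} \<and> (\<Sum>s\<in>S. \<sigma> s) = m"
proof (induction t arbitrary: m)
  case 0 then show ?case by auto
next
  case (Suc t)
  show ?case
  proof (cases "m \<le> (\<Sum>s<t. \<sigma> s)")
    case True
    then obtain S where "S \<subseteq> {..<t}" "(\<Sum>s\<in>S. \<sigma> s) = m" using Suc by auto
    then show ?thesis by (intro exI[of _ S]) auto
  next
    case False
    have "\<sigma> t \<le> m"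
    proof (cases t)
      case 0 then show ?thesis using False Suc.prems by (simp add: sig0)
    next
      case (Suc t') then show ?thesis using False sig_step[of t] Suc.prems by auto
    qed
    moreover have "m - \<sigma> t \<le> (\<Sum>s<t. \<sigma> s)" using Suc.prems by simp
    ultimately have "0 \<le> m - \<sigma> t" "m - \<sigma> t \<le> (\<Sum>s<t. \<sigma> s)" by simp_all
    moreover have "t \<le> r" using Suc.prems by simp
    ultimately obtain S where S: "S \<subseteq> {..<t}" "(\<Sum>s\<in>S. \<sigma> s) = m - \<sigma> t"
      using Suc.IH by blast
    then have "t \<notin> S" by auto
    then have "(\<Sum>s\<in>insert t S. \<sigma> s) = m" using S finite_subset[OF S(1)] by simp
    then show ?thesis using S by (intro exI[of _ "insert t S"]) auto
  qed
qed

lemma dot_sig_expand: "dot r x \<sigma> = (\<Sum>u<r. x u * \<sigma> u)" by (simp add: dot_def)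

lemma nonpos_zero:
  assumes "x \<in> zvec r" "dot r x \<sigma> = 0" "\<And>u. u < r \<Longrightarrow> x u \<le> 0"
  shows "x = (\<lambda>_. 0)"
proof
  fix u show "x u = 0"
  proof (cases "u < r")
    case True
    have "(\<Sum>i<r. - (x i * \<sigma> i)) = 0" using assms(2) by (simp add: dot_def sum_negf)
    moreover have "\<forall>i\<in>{..<r}. 0 \<le> - (x i * \<sigma> i)"
      using assms(3) sig_pos by (force intro!: mult_nonpos_nonneg)
    ultimately have "\<forall>i\<in>{..<r}. - (x i * \<sigma> i) = 0"
      by (subst sum_nonneg_eq_0_iff[symmetric]) auto
    then show ?thesis using True sig_pos[of u] by auto
  next
    case False then show ?thesis using assms(1) by (simp add: zvec_def)
  qed
qed

end


lemma h1: "(x::int) * (-1 - x) \<ge> -1 \<Longrightarrow> x = 0 \<or> x = -1"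
  by (smt (verit) mult_eq_0_iff mult_le_cancel_left2 mult_nonneg_nonpos zmult_eq_neg1_iff)
lemma h2: "(x::int) \<le> 0 \<Longrightarrow> x * (1 - x) \<ge> -1 \<Longrightarrow> x = 0"
  by (smt (verit) zero_le_mult_iff zmult_eq_neg1_iff)
lemma h3: "-((x::int) * x) \<ge> -1 \<Longrightarrow> x = 0 \<or> x = 1 \<or> x = -1"
  by (smt (verit) mult_eq_0_iff square_eq_1_iff zero_le_square)
lemma h4: "(x::int) * (-2 - x) \<ge> 0 \<Longrightarrow> x = 0 \<or> x = -1 \<or> x = -2"
  using zero_le_mult_iff by force
lemma h5: "(x::int) * (-2 - x) \<ge> 1 \<Longrightarrow> x = -1"
  by (smt (verit) mult_nonneg_nonpos mult_nonpos_nonneg)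
lemma h6: "(a::int) + b = e \<Longrightarrow> -1 \<le> e \<Longrightarrow> e \<le> 1 \<Longrightarrow> a * b \<le> 0"
  by (smt (verit) split_mult_neg_le)
lemma h7: "(x::int) * (-2 - x) \<le> 1"
proof -
  have "x * (-2 - x) = 1 - (x + 1) * (x + 1)" by (simp add: algebra_simps)
  then show ?thesis by simp
qed

lemma h8: "(x::int) \<noteq> 0 \<Longrightarrow> 1 \<le> x * x"
proof -
  assume "x \<noteq> 0"
  then have "0 < x * x" by (auto simp: zero_less_mult_iff linorder_neq_iff)
  then show ?thesis by simp
qed
lemma h9: "(x::int) * x \<le> 0 \<Longrightarrow> x = 0"
  using h8[of x] by linarith

lemma sum_nonpos_zero:
  assumes "finite A" "\<And>u. u \<in> A \<Longrightarrow> f u \<le> (0::int)" "0 \<le> sum f A" "u \<in> A"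
  shows "f u = 0"
proof -
  have "sum (\<lambda>u. - f u) A = 0" using assms sum_nonpos[of A f] by (simp add: sum_negf)
  then have "\<forall>u\<in>A. - f u = 0" using assms by (subst sum_nonneg_eq_0_iff[symmetric]) auto
  then show ?thesis using assms by auto
qed

lemma sum_nonpos_term:
  assumes "finite A" "\<And>u. u \<in> A \<Longrightarrow> f u \<le> (0::int)" "u \<in> A"
  shows "sum f A \<le> f u"
proof -
  have "sum f A = f u + sum f (A - {u})" using assms by (simp add: sum.remove)
  moreover have "sum f (A - {u}) \<le> 0" using assms by (intro sum_nonpos) auto
  ultimately show ?thesis by simp
qed

lemma sum_nonpos_two:
  assumes "finite A" "\<And>u. u \<in> A \<Longrightarrow> f u \<le> (0::int)" "u \<in> A" "u' \<in> A" "u \<noteq> u'"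
  shows "sum f A \<le> f u + f u'"
proof -
  have "sum f A = f u + sum f (A - {u})" using assms by (simp add: sum.remove)
  moreover have "sum f (A - {u}) \<le> f u'" using assms by (intro sum_nonpos_term) auto
  ultimately show ?thesis by simp
qed

context CM
begin

lemma irr_01:
  assumes wL: "w \<in> LL" and t: "t < r" "w t = 1" and wo: "\<And>u. u \<noteq> t \<Longrightarrow> w u = 0 \<or> w u = -1"
  shows "irreducible_vec r LL w"
  unfolding irreducible_vec_def
proof (intro conjI ballI impI)
  show "w \<in> LL" by fact
  show "w \<noteq> (\<lambda>_. 0)" using t by (metis one_neq_zero)
  fix x y assume xL: "x \<in> LL" and yL: "y \<in> LL" and H: "x \<noteq> (\<lambda>_. 0) \<and> y \<noteq> (\<lambda>_. 0) \<and> w = (\<lambda>t. x t + y t)"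
  then have wxy: "\<And>u. w u = x u + y u" by metis
  show "dot r x y \<le> -1"
  proof (rule ccontr)
    assume "\<not> dot r x y \<le> -1"
    then have ge: "0 \<le> (\<Sum>u<r. x u * y u)" by (simp add: dot_def)
    have le: "\<And>u. u \<in> {..<r} \<Longrightarrow> x u * y u \<le> 0"
    proof -
      fix u
      have "-1 \<le> w u \<and> w u \<le> 1" using wo[of u] t by (cases "u = t") auto
      then show "x u * y u \<le> 0" using h6[of "x u" "y u" "w u"] wxy[of u] by simp
    qed
    have Z: "\<And>u. u < r \<Longrightarrow> x u * y u = 0"
      using sum_nonpos_zero[of "{..<r}" "\<lambda>u. x u * y u"] le ge by auto
    have key: "\<And>z z'. z \<in> LL \<Longrightarrow> (\<And>u. w u = z u + z' u) \<Longrightarrow> (\<And>u. u < r \<Longrightarrow> z u * z' u = 0)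
        \<Longrightarrow> z t = 0 \<Longrightarrow> z = (\<lambda>_. 0)"
    proof -
      fix z z' assume zL: "z \<in> LL" and zw: "\<And>u. w u = z u + z' u"
        and zz: "\<And>u. u < r \<Longrightarrow> z u * z' u = 0" and zt: "z t = 0"
      have "\<And>u. u < r \<Longrightarrow> z u \<le> 0"
      proof -
        fix u assume u: "u < r"
        show "z u \<le> 0"
        proof (cases "u = t")
          case True then show ?thesis using zt by simp
        next
          case False
          have "z u = 0 \<or> z' u = 0" using zz[OF u] by simp
          then show ?thesis using zw[of u] wo[OF False] by auto
        qed
      qed
      then show "z = (\<lambda>_. 0)" using nonpos_zero zL by (auto simp: perp_lattice_def)
    qed
    show False
    proof (cases "x t = 0")
      case True
      then have "x = (\<lambda>_. 0)" using key[of x y] xL wxy Z by blast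
      then show False using H by simp
    next
      case False
      then have "y t = 0" using Z[OF t(1)] by simp
      then have "y = (\<lambda>_. 0)" using key[of y x] yL wxy Z by (simp add: add.commute mult.commute)
      then show False using H by simp
    qed
  qed
qed

end


context CM
begin

lemma tight_core:
  assumes t: "1 \<le> t" "t < r" and tight: "\<sigma> t = 1 + (\<Sum>s<t. \<sigma> s)"
    and wdef: "\<And>u. w u = of_bool (u = t) - of_bool (u < t) - of_bool (u = 0)"
    and xL: "x \<in> LL" and wxy: "\<And>u. w u = x u + y u" and xt: "x t \<le> 0"
    and ge: "0 \<le> dot r x y" and xnz: "x \<noteq> (\<lambda>_. 0)"
  shows False
proof -
  define T where "T u = x u * y u" for u
  define A where "A = {..<r} - {0}"
  define R where "R = sum T A"
  have finA: "finite A" by (simp add: A_def)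
  have r0: "0 < r" using t by simp
  have dsplit: "dot r x y = T 0 + R"
    unfolding dot_def R_def A_def T_def using r0 by (simp add: sum.remove)
  have y0: "y 0 = -2 - x 0" using wxy[of 0] wdef[of 0] t by simp
  have T0le: "T 0 \<le> 1" using h7[of "x 0"] y0 by (simp add: T_def)
  have Tle: "\<And>u. u \<in> A \<Longrightarrow> T u \<le> 0"
  proof -
    fix u assume "u \<in> A"
    then have "u \<noteq> 0" by (simp add: A_def)
    then have "-1 \<le> w u \<and> w u \<le> 1" using wdef[of u] by auto
    then show "T u \<le> 0" using h6[of "x u" "y u" "w u"] wxy[of u] by (simp add: T_def)
  qed
  have Rle: "R \<le> 0" unfolding R_def using Tle by (simp add: sum_nonpos)
  have sumge: "0 \<le> T 0 + R" using ge dsplit by simp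
  have Tge: "\<And>u. u \<in> A \<Longrightarrow> -1 \<le> T u"
  proof -
    fix u assume "u \<in> A"
    then have "R \<le> T u" unfolding R_def using sum_nonpos_term[of A T u] finA Tle by blast
    then show "-1 \<le> T u" using sumge T0le by simp
  qed
  have T0ge: "0 \<le> T 0" using sumge Rle by simp
  have xmid: "\<And>u. 0 < u \<Longrightarrow> u < t \<Longrightarrow> x u = 0 \<or> x u = -1"
  proof -
    fix u assume u: "0 < u" "u < t"
    then have "u \<in> A" using t by (simp add: A_def)
    moreover have "y u = -1 - x u" using wxy[of u] wdef[of u] u by simp
    ultimately show "x u = 0 \<or> x u = -1" using Tge[of u] h1[of "x u"] by (simp add: T_def)
  qed
  have xt0: "x t = 0"
  proof -
    have "t \<in> A" using t by (simp add: A_def)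
    moreover have "y t = 1 - x t" using wxy[of t] wdef[of t] t by simp
    ultimately show ?thesis using Tge[of t] h2[of "x t"] xt by (simp add: T_def)
  qed
  have x0: "x 0 = 0 \<or> x 0 = -1 \<or> x 0 = -2" using T0ge h4[of "x 0"] y0 by (simp add: T_def)
  have yhi: "\<And>u. t < u \<Longrightarrow> y u = - x u"
  proof -
    fix u assume "t < u"
    then have "w u = 0" using wdef[of u] t by simp
    then show "y u = - x u" using wxy[of u] by simp
  qed
  show False
  proof (cases "\<exists>u0. t < u0 \<and> u0 < r \<and> x u0 \<noteq> 0")
    case False
    have "\<And>u. u < r \<Longrightarrow> x u \<le> 0"
    proof -
      fix u assume u: "u < r"
      consider "u = 0" | "0 < u \<and> u < t" | "u = t" | "t < u" by linarith
      then show "x u \<le> 0"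
      proof cases
        case 1 then show ?thesis using x0 by auto
      next
        case 2 then show ?thesis using xmid[of u] by auto
      next
        case 3 then show ?thesis using xt0 by simp
      next
        case 4 then show ?thesis using False u by auto
      qed
    qed
    then have "x = (\<lambda>_. 0)" using nonpos_zero xL by (auto simp: perp_lattice_def)
    then show False using xnz by simp
  next
    case True
    then obtain u0 where u0: "t < u0" "u0 < r" "x u0 \<noteq> 0" by auto
    have u0A: "u0 \<in> A" using u0 by (simp add: A_def)
    have Tu0: "T u0 = - (x u0 * x u0)" using yhi[OF u0(1)] by (simp add: T_def)
    have "x u0 * x u0 \<ge> 1" using u0(3) by (rule h8)
    then have Tu0le: "T u0 \<le> -1" using Tu0 by simp
    have xu0: "x u0 = 1 \<or> x u0 = -1" using h3[of "x u0"] Tge[OF u0A] Tu0 u0(3) by auto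
    have "R \<le> T u0" unfolding R_def using sum_nonpos_term[of A T u0] finA Tle u0A by blast
    then have "1 \<le> T 0" using sumge Tu0le by simp
    then have x0m: "x 0 = -1" using h5[of "x 0"] y0 by (simp add: T_def)
    have others: "\<And>u. t < u \<Longrightarrow> u < r \<Longrightarrow> u \<noteq> u0 \<Longrightarrow> x u = 0"
    proof -
      fix u assume u: "t < u" "u < r" "u \<noteq> u0"
      then have uA: "u \<in> A" by (simp add: A_def)
      have "R \<le> T u0 + T u" unfolding R_def using sum_nonpos_two[of A T u0 u] finA Tle u0A uA u by blast
      then have "0 \<le> T u" using sumge T0le Tu0le by simp
      moreover have "T u = - (x u * x u)" using yhi[OF u(1)] by (simp add: T_def)
      ultimately show "x u = 0" using h9[of "x u"] by simp
    qed
    have split1: "{..<r} = {..<t} \<union> {t..<r}" using t by auto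
    have split2: "{t..<r} = insert t {t<..<r}" using t by auto
    have split3: "{t<..<r} = insert u0 ({t<..<r} - {u0})" using u0 by auto
    have z0: "(\<Sum>u\<in>{t<..<r} - {u0}. x u * \<sigma> u) = 0"
      by (rule sum.neutral) (use others in auto)
    have "dot r x \<sigma> = (\<Sum>u<t. x u * \<sigma> u) + (\<Sum>u\<in>{t..<r}. x u * \<sigma> u)"
      unfolding dot_def split1 by (rule sum.union_disjoint) auto
    also have "(\<Sum>u\<in>{t..<r}. x u * \<sigma> u) = x t * \<sigma> t + (\<Sum>u\<in>{t<..<r}. x u * \<sigma> u)"
      unfolding split2 by simp
    also have "(\<Sum>u\<in>{t<..<r}. x u * \<sigma> u) = x u0 * \<sigma> u0 + (\<Sum>u\<in>{t<..<r} - {u0}. x u * \<sigma> u)"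
      using u0 by (intro sum.remove) auto
    finally have deq: "dot r x \<sigma> = (\<Sum>u<t. x u * \<sigma> u) + x u0 * \<sigma> u0"
      using xt0 z0 by simp
    have dz: "dot r x \<sigma> = 0" using xL by (simp add: perp_lattice_def)
    define N where "N = (\<Sum>u<t. x u * \<sigma> u)"
    have Nle: "N \<le> -1"
    proof -
      have "N = x 0 * \<sigma> 0 + (\<Sum>u\<in>{..<t} - {0}. x u * \<sigma> u)"
        unfolding N_def using t by (intro sum.remove) auto
      moreover have "(\<Sum>u\<in>{..<t} - {0}. x u * \<sigma> u) \<le> 0"
      proof (rule sum_nonpos)
        fix u assume "u \<in> {..<t} - {0}"
        then have "x u \<le> 0" "0 \<le> \<sigma> u" using xmid[of u] sig_pos[of u] t by auto
        then show "x u * \<sigma> u \<le> 0" by (simp add: mult_nonpos_nonneg)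
      qed
      ultimately show ?thesis using x0m sig0 by simp
    qed
    have Nge: "- (\<Sum>u<t. \<sigma> u) \<le> N"
    proof -
      have "(\<Sum>u<t. - \<sigma> u) \<le> N" unfolding N_def
      proof (rule sum_mono)
        fix u assume u: "u \<in> {..<t}"
        have "x u = 0 \<or> x u = -1" using xmid[of u] x0m u by (cases "u = 0") auto
        then show "- \<sigma> u \<le> x u * \<sigma> u" using sig_pos[of u] u t by auto
      qed
      then show ?thesis by (simp add: sum_negf)
    qed
    have "\<sigma> t \<le> \<sigma> u0" using sig_mono[of t u0] u0 by simp
    then have "N = - (x u0 * \<sigma> u0)" using deq dz unfolding N_def by simp
    then show False using xu0 Nle Nge tight \<open>\<sigma> t \<le> \<sigma> u0\<close> by auto
  qed
qed

lemma irr_tight: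
  assumes t: "1 \<le> t" "t < r" and tight: "\<sigma> t = 1 + (\<Sum>s<t. \<sigma> s)"
    and wdef: "\<And>u. w u = of_bool (u = t) - of_bool (u < t) - of_bool (u = 0)"
    and wL: "w \<in> LL"
  shows "irreducible_vec r LL w"
  unfolding irreducible_vec_def
proof (intro conjI ballI impI)
  show "w \<in> LL" by fact
  have "w t = 1" using wdef[of t] t by simp
  then show "w \<noteq> (\<lambda>_. 0)" by (metis one_neq_zero)
  fix x y assume xL: "x \<in> LL" and yL: "y \<in> LL" and H: "x \<noteq> (\<lambda>_. 0) \<and> y \<noteq> (\<lambda>_. 0) \<and> w = (\<lambda>t. x t + y t)"
  then have wxy: "\<And>u. w u = x u + y u" by metis
  show "dot r x y \<le> -1"
  proof (rule ccontr)
    assume "\<not> dot r x y \<le> -1"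
    then have ge: "0 \<le> dot r x y" by simp
    have "x t + y t = 1" using wxy[of t] wdef[of t] t by simp
    then consider "x t \<le> 0" | "y t \<le> 0" by linarith
    then show False
    proof cases
      case 1 then show ?thesis using tight_core[OF t tight wdef xL wxy 1 ge] H by simp
    next
      case 2
      have "\<And>u. w u = y u + x u" using wxy by (simp add: add.commute)
      moreover have "0 \<le> dot r y x" using ge by (simp add: dot_sym)
      ultimately show ?thesis using tight_core[OF t tight wdef yL _ 2] H by blast
    qed
  qed
qed

end


lemma sum_ofbool_eq: "finite A \<Longrightarrow> t \<in> A \<Longrightarrow> (\<Sum>u\<in>A. of_bool (u = t) * (f u::int)) = f t"
proof -
  assume "finite A" "t \<in> A"
  have "(\<Sum>u\<in>A. of_bool (u = t) * f u) = (\<Sum>u\<in>A. if u = t then f u else 0)"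
    by (intro sum.cong) auto
  also have "\<dots> = f t" using \<open>finite A\<close> \<open>t \<in> A\<close> by (simp add: sum.delta)
  finally show ?thesis .
qed

lemma sum_ofbool_mem: "finite A \<Longrightarrow> S \<subseteq> A \<Longrightarrow> (\<Sum>u\<in>A. of_bool (u \<in> S) * (f u::int)) = sum f S"
proof -
  assume "finite A" "S \<subseteq> A"
  have "(\<Sum>u\<in>A. of_bool (u \<in> S) * f u) = (\<Sum>u\<in>A. if u \<in> S then f u else 0)"
    by (intro sum.cong) auto
  also have "\<dots> = sum f (A \<inter> S)" using \<open>finite A\<close> by (simp add: sum.inter_restrict)
  also have "A \<inter> S = S" using \<open>S \<subseteq> A\<close> by auto
  finally show ?thesis .
qed

context CM
begin

definition exc :: "nat \<Rightarrow> bool" where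
  "exc t \<longleftrightarrow> 2 \<le> t \<and> t < r \<and> (\<forall>s<t. \<sigma> s = 1) \<and> \<sigma> t = int t"

definition wgood :: "nat \<Rightarrow> (nat \<Rightarrow> int) \<Rightarrow> bool" where
  "wgood t w \<longleftrightarrow> w \<in> LL \<and> w t = 1 \<and> (\<forall>u. t < u \<longrightarrow> w u = 0) \<and> irreducible_vec r LL w \<and>
     ((2 \<le> t \<and> (\<forall>s. 1 \<le> s \<and> s < t \<longrightarrow> w s = \<sigma> s * w 0)) \<longrightarrow> exc t)"

lemma w_exists:
  assumes t: "1 \<le> t" "t < r" shows "\<exists>w. wgood t w"
proof (cases "\<sigma> t = 1 + (\<Sum>s<t. \<sigma> s)")
  case tight: True
  define w where "w u = (of_bool (u = t) - of_bool (u < t) - of_bool (u = 0) :: int)" for u :: nat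
  have wz: "w \<in> zvec r" using t by (auto simp: zvec_def w_def)
  have "dot r w \<sigma> = (\<Sum>u<r. of_bool (u = t) * \<sigma> u - of_bool (u \<in> {..<t}) * \<sigma> u
      - of_bool (u = 0) * \<sigma> u)"
    unfolding dot_def w_def by (intro sum.cong) (auto simp: algebra_simps)
  also have "\<dots> = (\<Sum>u<r. of_bool (u = t) * \<sigma> u) - (\<Sum>u<r. of_bool (u \<in> {..<t}) * \<sigma> u)
      - (\<Sum>u<r. of_bool (u = 0) * \<sigma> u)"
    by (simp only: sum_subtractf)
  also have "\<dots> = \<sigma> t - sum \<sigma> {..<t} - \<sigma> 0"
  proof -
    have e1: "(\<Sum>u<r. of_bool (u = t) * \<sigma> u) = \<sigma> t" using t by (intro sum_ofbool_eq) auto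
    have e2: "(\<Sum>u<r. of_bool (u \<in> {..<t}) * \<sigma> u) = sum \<sigma> {..<t}" using t by (intro sum_ofbool_mem) auto
    have e3: "(\<Sum>u<r. of_bool (u = 0) * \<sigma> u) = \<sigma> 0" using t by (intro sum_ofbool_eq) auto
    show ?thesis unfolding e1 e2 e3 ..
  qed
  finally have "dot r w \<sigma> = 0" using tight sig0 by simp
  then have wL: "w \<in> LL" using wz by (simp add: perp_lattice_def)
  have "wgood t w"
    unfolding wgood_def
  proof (intro conjI allI impI)
    show "w \<in> LL" by fact
    show "w t = 1" using t by (simp add: w_def)
    show "\<And>u. t < u \<Longrightarrow> w u = 0" using t by (simp add: w_def)
    show "irreducible_vec r LL w" by (rule irr_tight[OF t tight _ wL]) (simp add: w_def)
    assume H: "2 \<le> t \<and> (\<forall>s. 1 \<le> s \<and> s < t \<longrightarrow> w s = \<sigma> s * w 0)"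
    then have "w 1 = \<sigma> 1 * w 0" by auto
    then have "-1 = \<sigma> 1 * (-2)" using H by (simp add: w_def)
    then have False by presburger
    then show "exc t" ..
  qed
  then show ?thesis by blast
next
  case False
  then have nt: "\<sigma> t \<le> (\<Sum>s<t. \<sigma> s)" using sig_step[OF t] by simp
  obtain S where S: "S \<subseteq> {..<t}" "(\<Sum>s\<in>S. \<sigma> s) = \<sigma> t"
    using subset_sum[of t "\<sigma> t"] nt sig_pos[OF t(2)] t by auto
  define w where "w u = (of_bool (u = t) - of_bool (u \<in> S) :: int)" for u :: nat
  have tS: "t \<notin> S" using S by auto
  have wz: "w \<in> zvec r" using t S by (auto simp: zvec_def w_def)
  have "dot r w \<sigma> = (\<Sum>u<r. of_bool (u = t) * \<sigma> u - of_bool (u \<in> S) * \<sigma> u)"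
    unfolding dot_def w_def by (intro sum.cong) (auto simp: algebra_simps)
  also have "\<dots> = (\<Sum>u<r. of_bool (u = t) * \<sigma> u) - (\<Sum>u<r. of_bool (u \<in> S) * \<sigma> u)"
    by (simp only: sum_subtractf)
  also have "\<dots> = \<sigma> t - sum \<sigma> S"
  proof -
    have e1: "(\<Sum>u<r. of_bool (u = t) * \<sigma> u) = \<sigma> t" using t by (intro sum_ofbool_eq) auto
    have e2: "(\<Sum>u<r. of_bool (u \<in> S) * \<sigma> u) = sum \<sigma> S" using t S by (intro sum_ofbool_mem) auto
    show ?thesis unfolding e1 e2 ..
  qed
  finally have "dot r w \<sigma> = 0" using S by simp
  then have wL: "w \<in> LL" using wz by (simp add: perp_lattice_def)
  have "wgood t w"
    unfolding wgood_def
  proof (intro conjI allI impI)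
    show "w \<in> LL" by fact
    show wt: "w t = 1" using tS by (simp add: w_def)
    show "\<And>u. t < u \<Longrightarrow> w u = 0" using S by (auto simp: w_def)
    show "irreducible_vec r LL w"
      by (rule irr_01[OF wL t(2) wt]) (auto simp: w_def)
    assume H: "2 \<le> t \<and> (\<forall>s. 1 \<le> s \<and> s < t \<longrightarrow> w s = \<sigma> s * w 0)"
    show "exc t"
    proof (cases "0 \<in> S")
      case False
      have "S = {}"
      proof (rule ccontr)
        assume "S \<noteq> {}"
        then obtain s where s: "s \<in> S" by auto
        then have "s \<noteq> 0" using False by metis
        then have "1 \<le> s" "s < t" using S \<open>s \<in> S\<close> by auto
        then have "w s = \<sigma> s * w 0" using H by auto
        moreover have "w 0 = 0" using False t by (simp add: w_def)
        moreover have "w s = -1" using s tS by (auto simp: w_def)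
        ultimately show False by simp
      qed
      then show ?thesis using S sig_pos[OF t(2)] by simp
    next
      case True
      have w0: "w 0 = -1" using True t by (simp add: w_def)
      have all: "\<And>s. s < t \<Longrightarrow> \<sigma> s = 1 \<and> s \<in> S"
      proof -
        fix s assume s: "s < t"
        show "\<sigma> s = 1 \<and> s \<in> S"
        proof (cases "s = 0")
          case True then show ?thesis using sig0 \<open>0 \<in> S\<close> by simp
        next
          case False
          then have "w s = - \<sigma> s" using H s w0 by auto
          moreover have "1 \<le> \<sigma> s" using sig_pos s t by simp
          moreover have "w s = 0 \<or> w s = -1" using s by (auto simp: w_def)
          ultimately have "\<sigma> s = 1" "w s = -1" by auto
          then show ?thesis using s by (auto simp: w_def split: if_splits)
        qed
      qed
      then have "S = {..<t}" using S by auto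
      then have "\<sigma> t = (\<Sum>s<t. \<sigma> s)" using S by simp
      also have "\<dots> = (\<Sum>s<t. 1)" using all by simp
      finally show ?thesis using H t all by (simp add: exc_def)
    qed
  qed
  then show ?thesis by blast
qed

definition W :: "nat \<Rightarrow> nat \<Rightarrow> int" where "W t = (SOME w. wgood t w)"

lemma W_good: "1 \<le> t \<Longrightarrow> t < r \<Longrightarrow> wgood t (W t)"
  unfolding W_def using w_exists by (rule someI_ex) 

end


context CM
begin

lemma W_L: "1 \<le> t \<Longrightarrow> t < r \<Longrightarrow> W t \<in> LL" using W_good by (simp add: wgood_def)
lemma W_t: "1 \<le> t \<Longrightarrow> t < r \<Longrightarrow> W t t = 1" using W_good by (simp add: wgood_def)
lemma W_hi: "1 \<le> t \<Longrightarrow> t < r \<Longrightarrow> t < u \<Longrightarrow> W t u = 0" using W_good by (simp add: wgood_def)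
lemma W_irr: "1 \<le> t \<Longrightarrow> t < r \<Longrightarrow> irreducible_vec r LL (W t)" using W_good by (simp add: wgood_def)
lemma W_shape: "1 \<le> t \<Longrightarrow> t < r \<Longrightarrow> 2 \<le> t \<Longrightarrow> (\<And>s. 1 \<le> s \<Longrightarrow> s < t \<Longrightarrow> W t s = \<sigma> s * W t 0) \<Longrightarrow> exc t"
  using W_good by (simp add: wgood_def)

lemma tri_span:
  "m < r \<Longrightarrow> x \<in> LL \<Longrightarrow> (\<And>u. m < u \<Longrightarrow> x u = 0) \<Longrightarrow> \<exists>c. x = lincomb {1..m} c W"
proof (induction m arbitrary: x)
  case 0
  have "dot r x \<sigma> = (\<Sum>u<r. x u * \<sigma> u)" by (simp add: dot_def)
  also have "\<dots> = x 0 * \<sigma> 0 + (\<Sum>u\<in>{..<r} - {0}. x u * \<sigma> u)"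
    using 0 by (intro sum.remove) auto
  also have "(\<Sum>u\<in>{..<r} - {0}. x u * \<sigma> u) = 0" using 0 by (intro sum.neutral) auto
  finally have "x 0 = 0" using 0 sig0 by (simp add: perp_lattice_def)
  have "x = (\<lambda>_. 0)"
  proof
    fix u show "x u = 0"
    proof (cases "u = 0")
      case True then show ?thesis using \<open>x 0 = 0\<close> by simp
    next
      case False then show ?thesis using 0 by simp
    qed
  qed
  then show ?case by (intro exI[of _ "\<lambda>_. 0"]) (simp add: lincomb_def)
next
  case (Suc m)
  let ?a = "x (Suc m)"
  define x' where "x' u = x u - ?a * W (Suc m) u" for u
  have WL: "W (Suc m) \<in> LL" using W_L Suc.prems by simp
  have "x' \<in> zvec r" using Suc.prems WL by (auto simp: x'_def zvec_def perp_lattice_def)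
  moreover have "dot r x' \<sigma> = 0"
    unfolding x'_def using Suc.prems WL
    by (simp add: dot_diff_left dot_scale_left perp_lattice_def)
  ultimately have x'L: "x' \<in> LL" by (simp add: perp_lattice_def)
  have "\<And>u. m < u \<Longrightarrow> x' u = 0"
  proof -
    fix u assume u: "m < u"
    show "x' u = 0"
    proof (cases "u = Suc m")
      case True then show ?thesis using W_t[of "Suc m"] Suc.prems by (simp add: x'_def)
    next
      case False then have "Suc m < u" using u by simp
      then show ?thesis using W_hi[of "Suc m" u] Suc.prems by (simp add: x'_def)
    qed
  qed
  then obtain c where c: "x' = lincomb {1..m} c W" using Suc.IH[OF _ x'L] Suc.prems by auto
  have "x = lincomb {1..Suc m} (c(Suc m := ?a)) W"
  proof
    fix u
    have e: "{1..Suc m} = insert (Suc m) {1..m}" by auto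
    have "lincomb {1..Suc m} (c(Suc m := ?a)) W u = ?a * W (Suc m) u + lincomb {1..m} (c(Suc m := ?a)) W u"
      unfolding e by (subst lincomb_insert) auto
    also have "lincomb {1..m} (c(Suc m := ?a)) W = lincomb {1..m} c W" by (rule lincomb_cong) auto
    moreover have "x' u = lincomb {1..m} c W u" using c by simp
    ultimately show "x u = lincomb {1..Suc m} (c(Suc m := ?a)) W u" by (simp add: x'_def)
  qed
  then show ?case by blast
qed

lemma LL_span_W: "x \<in> LL \<Longrightarrow> \<exists>c. x = lincomb {1..r-1} c W"
  using tri_span[of "r - 1" x] r2 by (auto simp: perp_lattice_def zvec_def)

lemma nbr:
  assumes t: "2 \<le> t" "t < r" and orth: "\<And>s. 1 \<le> s \<Longrightarrow> s < t \<Longrightarrow> dot r (W s) (W t) = 0"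
  shows "exc t"
proof (rule W_shape)
  show "1 \<le> t" "t < r" "2 \<le> t" using t by auto
  fix s assume s: "1 \<le> s" "s < t"
  define f where "f u = (of_bool (u = s) - \<sigma> s * of_bool (u = 0) :: int)" for u
  have "f \<in> zvec r" using s t by (auto simp: f_def zvec_def)
  moreover have fd: "\<And>y. dot r y f = y s - \<sigma> s * y 0"
  proof -
    fix y
    have "dot r y f = (\<Sum>u<r. of_bool (u = s) * y u - \<sigma> s * (of_bool (u = 0) * y u))"
      unfolding dot_def f_def by (intro sum.cong) (auto simp: algebra_simps)
    also have "\<dots> = (\<Sum>u<r. of_bool (u = s) * y u) - \<sigma> s * (\<Sum>u<r. of_bool (u = 0) * y u)"
      by (simp only: sum_subtractf sum_distrib_left)
    also have "\<dots> = y s - \<sigma> s * y 0"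
    proof -
      have e1: "(\<Sum>u<r. of_bool (u = s) * y u) = y s" using s t by (intro sum_ofbool_eq) auto
      have e2: "(\<Sum>u<r. of_bool (u = 0) * y u) = y 0" using s t by (intro sum_ofbool_eq) auto
      show ?thesis unfolding e1 e2 ..
    qed
    finally show "dot r y f = y s - \<sigma> s * y 0" .
  qed
  moreover have "dot r f \<sigma> = 0" using fd[of \<sigma>] sig0 by (simp add: dot_sym)
  ultimately have fL: "f \<in> LL" by (simp add: perp_lattice_def)
  obtain c where c: "f = lincomb {1..t-1} c W"
  proof -
    have "\<And>u. t - 1 < u \<Longrightarrow> f u = 0" using s by (auto simp: f_def)
    moreover have "t - 1 < r" using t by simp
    ultimately have "\<exists>c. f = lincomb {1..t-1} c W" using tri_span[of "t - 1" f] fL by blast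
    then show ?thesis using that by blast
  qed
  have "dot r (W t) f = (\<Sum>q\<in>{1..t-1}. c q * dot r (W t) (W q))"
    unfolding c by (rule dot_lincomb_right)
  also have "\<dots> = 0" using orth by (intro sum.neutral) (auto simp: dot_sym)
  finally show "W t s = \<sigma> s * W t 0" using fd[of "W t"] by simp
qed

lemma exc_uniq_lt: "exc t \<Longrightarrow> exc t' \<Longrightarrow> t < t' \<Longrightarrow> False"
proof -
  assume a: "exc t" "exc t'" "t < t'"
  from a(2) have "\<forall>s<t'. \<sigma> s = 1" by (simp add: exc_def)
  then have "\<sigma> t = 1" using a(3) by simp
  moreover from a(1) have "\<sigma> t = int t" "2 \<le> t" by (simp_all add: exc_def)
  ultimately show False by simp
qed

lemma exc_uniq: assumes "exc t" "exc t'" shows "t = t'"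
proof (rule ccontr)
  assume "t \<noteq> t'"
  then consider "t < t'" | "t' < t" by linarith
  then show False
  proof cases
    case 1 show False by (rule exc_uniq_lt[OF assms 1])
  next
    case 2 show False by (rule exc_uniq_lt[OF assms(2) assms(1) 2])
  qed
qed

definition T0 :: nat where "T0 = (if \<exists>t. exc t then (SOME t. exc t) else 1)"

lemma T0_range: "1 \<le> T0 \<and> T0 < r"
proof (cases "\<exists>t. exc t")
  case True
  then have "exc (SOME t. exc t)" by (rule someI_ex)
  then have "2 \<le> (SOME t. exc t) \<and> (SOME t. exc t) < r" unfolding exc_def by blast
  moreover have "T0 = (SOME t. exc t)" using True by (simp add: T0_def)
  ultimately show ?thesis by simp
next
  case False then show ?thesis using r2 by (simp add: T0_def)
qed

lemma nbr2:
  assumes t: "1 \<le> t" "t < r" "t \<noteq> 1" "t \<noteq> T0"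
  shows "\<exists>s. 1 \<le> s \<and> s < t \<and> dot r (W s) (W t) \<noteq> 0"
proof (rule ccontr)
  assume "\<not> ?thesis"
  then have "\<And>s. 1 \<le> s \<Longrightarrow> s < t \<Longrightarrow> dot r (W s) (W t) = 0" by blast
  moreover have "2 \<le> t" using t by simp
  ultimately have "exc t" using t(2) nbr by blast
  then have "exc (SOME t. exc t)" by (rule someI)
  then have "(SOME t. exc t) = t" using exc_uniq \<open>exc t\<close> by blast
  moreover have "\<exists>t. exc t" using \<open>exc t\<close> by blast
  ultimately have "T0 = t" unfolding T0_def by simp
  then show False using t by simp
qed

lemma two_class:
  assumes resp: "\<And>s t. 1 \<le> s \<Longrightarrow> s < r \<Longrightarrow> 1 \<le> t \<Longrightarrow> t < r \<Longrightarrow> dot r (W s) (W t) \<noteq> 0 \<Longrightarrow> (Q s \<longleftrightarrow> Q t)"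
    and q: "Q T0 = Q 1"
  shows "1 \<le> t \<Longrightarrow> t < r \<Longrightarrow> (Q t \<longleftrightarrow> Q 1)"
proof (induction t rule: less_induct)
  case (less t)
  show ?case
  proof (cases "t = 1 \<or> t = T0")
    case True then show ?thesis using q by auto
  next
    case False
    then obtain s where s: "1 \<le> s" "s < t" "dot r (W s) (W t) \<noteq> 0" using nbr2[of t] less.prems by auto
    have "s < r" using s less.prems by simp
    then have "Q s \<longleftrightarrow> Q t" using resp[of s t] less.prems s by blast
    moreover have "Q s \<longleftrightarrow> Q 1" using less.IH[of s] s \<open>s < r\<close> by blast
    ultimately show ?thesis by simp
  qed
qed

end


interpretation RV: vector_space "\<lambda>(a::real) (f::nat \<Rightarrow> real). (\<lambda>u. a * f u)"
  by unfold_locales (auto simp: fun_eq_iff algebra_simps)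

lemma sum_fun_apply: "(\<Sum>i\<in>I. F i) (u::'b) = (\<Sum>i\<in>I. F i u)"
  by (induction I rule: infinite_finite_induct) auto

context CM
begin

definition RR :: "(nat \<Rightarrow> int) \<Rightarrow> nat \<Rightarrow> real" where "RR f = (\<lambda>u. real_of_int (f u))"

lemma W_tri_indep:
  "m < r \<Longrightarrow> (\<And>u. (\<Sum>t\<in>{1..m}. a t * real_of_int (W t u)) = 0) \<Longrightarrow> \<forall>t\<in>{1..m}. a t = 0"
proof (induction m)
  case 0 then show ?case by simp
next
  case (Suc m)
  have e: "{1..Suc m} = insert (Suc m) {1..m}" by auto
  have z: "\<And>t. t \<in> {1..m} \<Longrightarrow> W t (Suc m) = 0" using W_hi Suc.prems by auto
  have "(\<Sum>t\<in>{1..Suc m}. a t * real_of_int (W t (Suc m))) = a (Suc m)"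
    unfolding e using W_t[of "Suc m"] Suc.prems z by simp
  then have am: "a (Suc m) = 0" using Suc.prems by simp
  have "\<And>u. (\<Sum>t\<in>{1..m}. a t * real_of_int (W t u)) = 0"
  proof -
    fix u
    have "(\<Sum>t\<in>{1..Suc m}. a t * real_of_int (W t u)) = a (Suc m) * real_of_int (W (Suc m) u) + (\<Sum>t\<in>{1..m}. a t * real_of_int (W t u))"
      unfolding e by simp
    then show "(\<Sum>t\<in>{1..m}. a t * real_of_int (W t u)) = 0" using am Suc.prems by simp
  qed
  then have "\<forall>t\<in>{1..m}. a t = 0" using Suc by simp
  then show ?case using am unfolding e by blast
qed

lemma RRW_inj: "inj_on (\<lambda>t. RR (W t)) {1..r-1}"
proof (rule inj_onI)
  fix s t assume s: "s \<in> {1..r-1}" and t: "t \<in> {1..r-1}" and eq: "RR (W s) = RR (W t)"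
  have sr: "s < r" "t < r" "1 \<le> s" "1 \<le> t" using s t r2 by auto
  show "s = t"
  proof (rule ccontr)
    assume "s \<noteq> t"
    then consider "s < t" | "t < s" by linarith
    then show False
    proof cases
      case 1
      have "RR (W s) t = RR (W t) t" using eq by simp
      then show False using W_hi[of s t] W_t[of t] sr 1 by (simp add: RR_def)
    next
      case 2
      have "RR (W s) s = RR (W t) s" using eq by simp
      then show False using W_hi[of t s] W_t[of s] sr 2 by (simp add: RR_def)
    qed
  qed
qed

lemma rank_bound:
  assumes finI: "finite I" and sp: "\<And>x. x \<in> LL \<Longrightarrow> \<exists>c. x = lincomb I c g"
  shows "r - 1 \<le> card I"
proof -
  define S where "S = (\<lambda>t. RR (W t)) ` {1..r-1}"
  define T where "T = (\<lambda>i. RR (g i)) ` I"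
  have finT: "finite T" using finI by (simp add: T_def)
  have "S \<subseteq> RV.span T"
  proof
    fix z assume "z \<in> S"
    then obtain t where t: "t \<in> {1..r-1}" "z = RR (W t)" by (auto simp: S_def)
    then have "W t \<in> LL" using W_L r2 by auto
    then obtain c where c: "W t = lincomb I c g" using sp by blast
    have "z = (\<Sum>i\<in>I. (\<lambda>u. real_of_int (c i) * RR (g i) u))"
      unfolding t(2) c by (auto simp: fun_eq_iff sum_fun_apply RR_def lincomb_def)
    also have "\<dots> \<in> RV.span T"
      by (intro RV.span_sum RV.span_scale RV.span_base) (auto simp: T_def)
    finally show "z \<in> RV.span T" .
  qed
  moreover have "RV.independent S"
  proof (rule RV.independent_if_scalars_zero)
    show "finite S" by (simp add: S_def)
    fix f z assume sum0: "(\<Sum>x\<in>S. (\<lambda>u. f x * x u)) = 0" and zS: "z \<in> S"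
    have "(\<Sum>x\<in>S. (\<lambda>u. f x * x u)) = (\<Sum>t\<in>{1..r-1}. (\<lambda>u. f (RR (W t)) * RR (W t) u))"
      unfolding S_def by (subst sum.reindex[OF RRW_inj]) simp
    then have "\<And>u. (\<Sum>t\<in>{1..r-1}. f (RR (W t)) * real_of_int (W t u)) = 0"
      using sum0 by (simp add: fun_eq_iff sum_fun_apply RR_def)
    then have "\<forall>t\<in>{1..r-1}. f (RR (W t)) = 0" using W_tri_indep[of "r - 1" "\<lambda>t. f (RR (W t))"] r2 by simp
    then show "f z = 0" using zS by (auto simp: S_def)
  qed
  ultimately have "card S \<le> card T" using RV.independent_span_bound[OF finT] by blast
  moreover have "card S = r - 1" unfolding S_def by (subst card_image[OF RRW_inj]) simp
  moreover have "card T \<le> card I" unfolding T_def using finI by (rule card_image_le)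
  ultimately show ?thesis by simp
qed

end


lemma quad_id:
  fixes P :: "nat \<Rightarrow> nat \<Rightarrow> int"
  assumes fin: "finite V" and sym: "\<And>s t. P s t = P t s" and row: "\<And>s. s \<in> V \<Longrightarrow> (\<Sum>t\<in>V. P s t) = 0"
  shows "2 * (\<Sum>s\<in>V. \<Sum>t\<in>V. a s * b t * P s t) = (\<Sum>s\<in>V. \<Sum>t\<in>V. - P s t * ((a s - a t) * (b s - b t)))"
proof -
  have e: "\<And>s t. - P s t * ((a s - a t) * (b s - b t)) =
      (a s * b t * P s t + a t * b s * P s t) - (a s * b s * P s t + a t * b t * P s t)"
    by (simp add: algebra_simps)
  have S1: "(\<Sum>s\<in>V. \<Sum>t\<in>V. a s * b s * P s t) = 0"
    by (simp add: sum_distrib_left[symmetric] row)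
  have S2: "(\<Sum>s\<in>V. \<Sum>t\<in>V. a t * b t * P s t) = 0"
  proof -
    have "(\<Sum>s\<in>V. \<Sum>t\<in>V. a t * b t * P s t) = (\<Sum>t\<in>V. \<Sum>s\<in>V. a t * b t * P t s)"
      by (subst sum.swap) (simp add: sym)
    also have "\<dots> = 0" by (simp add: sum_distrib_left[symmetric] row)
    finally show ?thesis .
  qed
  have S4: "(\<Sum>s\<in>V. \<Sum>t\<in>V. a t * b s * P s t) = (\<Sum>s\<in>V. \<Sum>t\<in>V. a s * b t * P s t)"
    by (subst sum.swap) (simp add: sym)
  have "(\<Sum>s\<in>V. \<Sum>t\<in>V. - P s t * ((a s - a t) * (b s - b t))) =
      (\<Sum>s\<in>V. \<Sum>t\<in>V. (a s * b t * P s t + a t * b s * P s t) - (a s * b s * P s t + a t * b t * P s t))"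
    by (simp only: e)
  also have "\<dots> = ((\<Sum>s\<in>V. \<Sum>t\<in>V. a s * b t * P s t) + (\<Sum>s\<in>V. \<Sum>t\<in>V. a t * b s * P s t))
     - ((\<Sum>s\<in>V. \<Sum>t\<in>V. a s * b s * P s t) + (\<Sum>s\<in>V. \<Sum>t\<in>V. a t * b t * P s t))"
    by (simp only: sum_subtractf sum.distrib)
  finally show ?thesis using S1 S2 S4 by simp
qed

lemma double_sum_nonpos_zero:
  fixes T :: "nat \<Rightarrow> nat \<Rightarrow> int"
  assumes "finite V" "\<And>s t. s \<in> V \<Longrightarrow> t \<in> V \<Longrightarrow> T s t \<le> 0" "0 \<le> (\<Sum>s\<in>V. \<Sum>t\<in>V. T s t)"
    "s \<in> V" "t \<in> V"
  shows "T s t = 0"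
proof -
  have "(\<Sum>t\<in>V. T s t) = 0"
    using sum_nonpos_zero[of V "\<lambda>s. \<Sum>t\<in>V. T s t" s] assms by (auto intro: sum_nonpos)
  then show ?thesis using sum_nonpos_zero[of V "\<lambda>t. T s t" t] assms by auto
qed

locale SB = CM +
  fixes v :: "nat \<Rightarrow> nat \<Rightarrow> int"
  assumes sb: "obtuse_superbase r (perp_lattice r \<sigma>) (r - 1) v"
begin

abbreviation "VV \<equiv> {..<r}"
abbreviation "pp s t \<equiv> dot r (v s) (v t)"

lemma finV: "finite VV" by simp
lemma cardV: "card VV = r" using r2 by simp

lemma Veq: "{..r - 1} = VV" using r2 by auto
lemma sb': "obtuse_superbase r LL (r - 1) v" by (rule sb)
lemma vL: "i \<in> VV \<Longrightarrow> v i \<in> LL" using sb' unfolding obtuse_superbase_def spans_def Veq by blast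
lemma vspan: "x \<in> LL \<Longrightarrow> \<exists>c. x = lincomb VV c v" using sb' unfolding obtuse_superbase_def spans_def Veq by blast
lemma pneg: "i \<in> VV \<Longrightarrow> j \<in> VV \<Longrightarrow> i \<noteq> j \<Longrightarrow> pp i j \<le> 0" using sb' unfolding obtuse_superbase_def Veq
  by (metis atMost_iff lessThan_iff Veq)
lemma vsum_fun: "lincomb VV (\<lambda>_. 1) v = (\<lambda>_. 0)" using sb' unfolding obtuse_superbase_def Veq by blast
lemma vsum: "(\<Sum>i\<in>VV. v i u) = 0"
  using vsum_fun by (simp add: lincomb_def fun_eq_iff)

lemma prow: "(\<Sum>t\<in>VV. pp s t) = 0"
proof -
  have "(\<Sum>t\<in>VV. pp s t) = dot r (v s) (lincomb VV (\<lambda>_. 1) v)" by (simp add: dot_lincomb_right)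
  also have "\<dots> = 0" unfolding vsum_fun by (simp add: dot_def)
  finally show ?thesis .
qed

lemma dot_lc_lc: "dot r (lincomb X a v) (lincomb Y b v) = (\<Sum>s\<in>X. \<Sum>t\<in>Y. a s * b t * pp s t)"
  by (subst dot_lincomb_left) (simp only: dot_lincomb_right sum_distrib_left mult.assoc)

lemma bil: "2 * dot r (lincomb VV a v) (lincomb VV b v) = (\<Sum>s\<in>VV. \<Sum>t\<in>VV. - pp s t * ((a s - a t) * (b s - b t)))"
  unfolding dot_lc_lc by (rule quad_id) (auto simp: dot_sym prow)

lemma lincomb_delta: "i \<in> X \<Longrightarrow> finite X \<Longrightarrow> lincomb X (\<lambda>s. of_bool (s = i)) v = v i"
proof
  fix u assume "i \<in> X" "finite X"
  have "lincomb X (\<lambda>s. of_bool (s = i)) v u = (\<Sum>s\<in>X. if s = i then v s u else 0)"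
    unfolding lincomb_def by (intro sum.cong) auto
  also have "\<dots> = v i u" using \<open>i \<in> X\<close> \<open>finite X\<close> by (simp add: sum.delta)
  finally show "lincomb X (\<lambda>s. of_bool (s = i)) v u = v i u" .
qed

definition disc :: "nat set \<Rightarrow> bool" where
  "disc C \<longleftrightarrow> C \<subseteq> VV \<and> C \<noteq> {} \<and> C \<noteq> VV \<and> (\<forall>c\<in>C. \<forall>d\<in>VV - C. pp c d = 0)"

lemma conn: "\<not> disc C"
proof
  assume "disc C"
  then have C: "C \<subseteq> VV" "C \<noteq> {}" "C \<noteq> VV" and orth: "\<And>c d. c \<in> C \<Longrightarrow> d \<in> VV - C \<Longrightarrow> pp c d = 0"
    by (auto simp: disc_def)
  define D where "D = VV - C"
  have finC: "finite C" using C finite_subset by blast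
  have VCD: "VV = C \<union> D" "C \<inter> D = {}" using C by (auto simp: D_def)
  have sumCD: "\<And>u. (\<Sum>i\<in>C. v i u) + (\<Sum>i\<in>D. v i u) = 0"
  proof -
    fix u
    have "(\<Sum>i\<in>VV. v i u) = (\<Sum>i\<in>C. v i u) + (\<Sum>i\<in>D. v i u)"
      unfolding VCD(1) using finC VCD by (intro sum.union_disjoint) (auto simp: D_def)
    then show "(\<Sum>i\<in>C. v i u) + (\<Sum>i\<in>D. v i u) = 0" using vsum[of u] VCD by simp
  qed
  define uC where "uC = lincomb C (\<lambda>_. 1) v"
  define uD where "uD = lincomb D (\<lambda>_. 1) v"
  have uCD: "uD = (\<lambda>t. - uC t)" using sumCD by (auto simp: uC_def uD_def lincomb_def fun_eq_iff add_eq_0_iff)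
  have "dot r uC uD = 0"
    unfolding uC_def uD_def dot_lc_lc using orth by (auto simp: D_def intro!: sum.neutral)
  then have "dot r uC uC = 0" using uCD by (simp add: dot_def sum_negf)
  moreover have "uC \<in> zvec r" unfolding uC_def using vL C by (intro lincomb_in_zvec) (auto simp: perp_lattice_def)
  ultimately have uC0: "uC = (\<lambda>_. 0)" by (rule dot_self_zero[rotated])
  then have uD0: "uD = (\<lambda>_. 0)" using uCD by simp
  obtain c0 where c0: "c0 \<in> C" using C by auto
  obtain d0 where d0: "d0 \<in> D" using C by (auto simp: D_def)
  define I where "I = VV - {c0, d0}"
  have "c0 \<noteq> d0" using c0 d0 by (auto simp: D_def)
  moreover have "{c0, d0} \<subseteq> VV" using c0 d0 C by (auto simp: D_def)
  ultimately have cardI: "card I = r - 2" unfolding I_def using cardV by (subst card_Diff_subset) auto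
  have spI: "\<And>x. x \<in> LL \<Longrightarrow> \<exists>c. x = lincomb I c v"
  proof -
    fix x assume "x \<in> LL"
    then obtain c where c: "x = lincomb VV c v" using vspan by blast
    define c' where "c' s = c s - (if s \<in> C then c c0 else c d0)" for s
    have "lincomb VV c' v = lincomb VV c v"
    proof
      fix u
      have "lincomb VV c' v u = (\<Sum>s\<in>C. c' s * v s u) + (\<Sum>s\<in>D. c' s * v s u)"
        unfolding lincomb_def VCD(1) using finC VCD by (intro sum.union_disjoint) (auto simp: D_def)
      also have "(\<Sum>s\<in>C. c' s * v s u) = (\<Sum>s\<in>C. c s * v s u) - c c0 * (\<Sum>s\<in>C. v s u)"
        by (simp add: c'_def algebra_simps sum_subtractf sum_distrib_left)
      also have "(\<Sum>s\<in>D. c' s * v s u) = (\<Sum>s\<in>D. c s * v s u) - c d0 * (\<Sum>s\<in>D. v s u)"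
        by (simp add: c'_def D_def algebra_simps sum_subtractf sum_distrib_left)
      also have "(\<Sum>s\<in>C. v s u) = 0" using uC0 by (simp add: uC_def lincomb_def fun_eq_iff)
      also have "(\<Sum>s\<in>D. v s u) = 0" using uD0 by (simp add: uD_def lincomb_def fun_eq_iff)
      finally have e1: "lincomb VV c' v u = (\<Sum>s\<in>C. c s * v s u) + (\<Sum>s\<in>D. c s * v s u)" by simp
      have "(\<Sum>s\<in>C. c s * v s u) + (\<Sum>s\<in>D. c s * v s u) = lincomb VV c v u"
        unfolding lincomb_def VCD(1) using finC VCD by (intro sum.union_disjoint[symmetric]) (auto simp: D_def)
      then show "lincomb VV c' v u = lincomb VV c v u" using e1 by simp
    qed
    moreover have "lincomb VV c' v = lincomb I c' v"
    proof -
      have "c' c0 = 0" "c' d0 = 0" using c0 d0 by (auto simp: c'_def D_def)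
      then show ?thesis unfolding lincomb_def I_def
        by (auto simp: fun_eq_iff intro!: sum.mono_neutral_right)
    qed
    ultimately show "\<exists>c. x = lincomb I c v" using c by metis
  qed
  have "r - 1 \<le> card I" using rank_bound[of I v] spI by (simp add: I_def)
  then show False using cardI r2 by simp
qed

lemma v_nz: "i \<in> VV \<Longrightarrow> v i \<noteq> (\<lambda>_. 0)"
proof
  assume i: "i \<in> VV" and z: "v i = (\<lambda>_. 0)"
  have "disc {i}" unfolding disc_def
  proof (intro conjI ballI)
    show "{i} \<subseteq> VV" "{i} \<noteq> {}" using i by auto
    show "{i} \<noteq> VV"
    proof
      assume "{i} = VV"
      then have "card {i} = r" using cardV by simp
      then show False using r2 by simp
    qed
    fix c d assume "c \<in> {i}" "d \<in> VV - {i}"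
    then show "pp c d = 0" using z by (simp add: dot_def)
  qed
  then show False using conn by blast
qed

end


context SB
begin

definition bad :: "nat \<Rightarrow> bool" where
  "bad i \<longleftrightarrow> (\<exists>A B. A \<union> B = VV - {i} \<and> A \<inter> B = {} \<and> A \<noteq> {} \<and> B \<noteq> {} \<and> (\<forall>a\<in>A. \<forall>b\<in>B. pp a b = 0))"

lemma other_elem: "\<exists>s. s \<in> VV \<and> s \<noteq> i"
proof (cases "i = 0")
  case True then show ?thesis using r2 by (intro exI[of _ 1]) auto
next
  case False then show ?thesis using r2 by (intro exI[of _ 0]) auto
qed

lemma red_bad:
  assumes i: "i \<in> VV" and xL: "x \<in> LL" and yL: "y \<in> LL" and xnz: "x \<noteq> (\<lambda>_. 0)" and ynz: "y \<noteq> (\<lambda>_. 0)"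
    and vi: "v i = (\<lambda>t. x t + y t)" and ge: "0 \<le> dot r x y"
  shows "bad i"
proof -
  obtain a where a: "x = lincomb VV a v" using vspan xL by blast
  define b where "b s = of_bool (s = i) - a s" for s
  have yb: "y = lincomb VV b v"
  proof -
    have "lincomb VV b v = (\<lambda>t. lincomb VV (\<lambda>s. of_bool (s = i)) v t - lincomb VV a v t)"
      unfolding b_def by (rule lincomb_diff[symmetric])
    also have "\<dots> = (\<lambda>t. v i t - x t)" using lincomb_delta[of i VV] i a by simp
    also have "\<dots> = y" using vi by (simp add: fun_eq_iff)
    finally show ?thesis by simp
  qed
  define T where "T s t = - pp s t * ((a s - a t) * (b s - b t))" for s t
  have "0 \<le> (\<Sum>s\<in>VV. \<Sum>t\<in>VV. T s t)" using bil[of a b] ge a yb by (simp add: T_def)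
  moreover have Tle: "\<And>s t. s \<in> VV \<Longrightarrow> t \<in> VV \<Longrightarrow> T s t \<le> 0"
  proof -
    fix s t assume st: "s \<in> VV" "t \<in> VV"
    show "T s t \<le> 0"
    proof (cases "s = t")
      case True then show ?thesis by (simp add: T_def)
    next
      case False
      then have "0 \<le> - pp s t" using pneg st by simp
      moreover have "(a s - a t) * (b s - b t) \<le> 0"
        by (rule h6[of _ _ "of_bool (s = i) - of_bool (t = i)"]) (auto simp: b_def)
      ultimately show ?thesis unfolding T_def by (rule mult_nonneg_nonpos)
    qed
  qed
  ultimately have Z: "\<And>s t. s \<in> VV \<Longrightarrow> t \<in> VV \<Longrightarrow> T s t = 0"
    using double_sum_nonpos_zero[of VV T] by blast
  have same: "\<And>s t. s \<in> VV \<Longrightarrow> t \<in> VV \<Longrightarrow> s \<noteq> i \<Longrightarrow> t \<noteq> i \<Longrightarrow> pp s t \<noteq> 0 \<Longrightarrow> a s = a t"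
  proof -
    fix s t assume st: "s \<in> VV" "t \<in> VV" "s \<noteq> i" "t \<noteq> i" "pp s t \<noteq> 0"
    then have z: "(a s - a t) * (b s - b t) = 0" using Z[of s t] by (simp add: T_def)
    have "b s - b t = - (a s - a t)" using st by (simp add: b_def)
    then have "(a s - a t) * (b s - b t) = - ((a s - a t) * (a s - a t))" by (simp only: mult_minus_right)
    then have "(a s - a t) * (a s - a t) = 0" using z by simp
    then have "a s - a t = 0" by (metis mult_eq_0_iff)
    then show "a s = a t" by simp
  qed
  show "bad i"
  proof (cases "\<exists>s0\<in>VV - {i}. \<exists>s1\<in>VV - {i}. a s0 \<noteq> a s1")
    case True
    then obtain s0 s1 where s01: "s0 \<in> VV - {i}" "s1 \<in> VV - {i}" "a s0 \<noteq> a s1" by blast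
    define A where "A = {s \<in> VV - {i}. a s = a s0}"
    define B where "B = {s \<in> VV - {i}. a s \<noteq> a s0}"
    have P1: "A \<union> B = VV - {i}" "A \<inter> B = {}" unfolding A_def B_def by blast+
    have "s0 \<in> A" using s01(1) by (simp add: A_def)
    then have P2: "A \<noteq> {}" by blast
    have "s1 \<in> B" using s01(2,3) by (simp add: B_def)
    then have P3: "B \<noteq> {}" by blast
    have P4: "\<forall>x\<in>A. \<forall>y\<in>B. pp x y = 0"
    proof (intro ballI)
      fix s t assume s: "s \<in> A" and t: "t \<in> B"
      then have "a s \<noteq> a t" "s \<in> VV" "t \<in> VV" "s \<noteq> i" "t \<noteq> i" unfolding A_def B_def by auto
      then show "pp s t = 0" using same[of s t] by blast
    qed
    show ?thesis unfolding bad_def by (rule exI[of _ A], rule exI[of _ B], intro conjI P1 P2 P3 P4)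
  next
    case False
    obtain s' where s': "s' \<in> VV" "s' \<noteq> i" using other_elem by blast
    define \<alpha> where "\<alpha> = a s'"
    have aconst: "\<And>s. s \<in> VV - {i} \<Longrightarrow> a s = \<alpha>"
    proof -
      fix s assume "s \<in> VV - {i}"
      moreover have "s' \<in> VV - {i}" using s' by simp
      ultimately show "a s = \<alpha>" using False unfolding \<alpha>_def by blast
    qed
    define d where "d = a i - \<alpha>"
    have xd: "x = (\<lambda>t. d * v i t)"
    proof
      fix t
      have rm1: "(\<Sum>s\<in>VV. a s * v s t) = a i * v i t + (\<Sum>s\<in>VV - {i}. a s * v s t)"
        using i by (intro sum.remove) auto
      have rm2: "(\<Sum>s\<in>VV. v s t) = v i t + (\<Sum>s\<in>VV - {i}. v s t)"
        using i by (intro sum.remove) auto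
      have c1: "(\<Sum>s\<in>VV - {i}. a s * v s t) = (\<Sum>s\<in>VV - {i}. \<alpha> * v s t)"
        using aconst by (intro sum.cong) auto
      have c2: "(\<Sum>s\<in>VV - {i}. \<alpha> * v s t) = \<alpha> * (\<Sum>s\<in>VV - {i}. v s t)"
        by (simp add: sum_distrib_left)
      have c3: "(\<Sum>s\<in>VV - {i}. v s t) = - v i t" using rm2 vsum[of t] by simp
      have "x t = (\<Sum>s\<in>VV. a s * v s t)" unfolding a lincomb_def by simp
      also have "\<dots> = a i * v i t + \<alpha> * (- v i t)" unfolding rm1 c1 c2 c3 ..
      finally show "x t = d * v i t" by (simp add: d_def algebra_simps)
    qed
    have d0: "d \<noteq> 0" using xd xnz by (auto simp: fun_eq_iff)
    have d1: "d \<noteq> 1"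
    proof
      assume "d = 1"
      then have "x = v i" using xd by (simp add: fun_eq_iff)
      then have "y = (\<lambda>_. 0)" using vi by (simp add: fun_eq_iff)
      then show False using ynz by simp
    qed
    have "disc {i}" unfolding disc_def
    proof (intro conjI ballI)
      show "{i} \<subseteq> VV" "{i} \<noteq> {}" using i by auto
      show "{i} \<noteq> VV" using s' by auto
      fix c t assume c: "c \<in> {i}" and t: "t \<in> VV - {i}"
      have "T i t = 0" using Z[of i t] i t by simp
      moreover have "(a i - a t) * (b i - b t) = d * (1 - d)"
        using aconst[OF t] t by (simp add: b_def d_def)
      moreover have "d * (1 - d) \<noteq> 0" using d0 d1 by simp
      ultimately show "pp c t = 0" using c by (simp add: T_def)
    qed
    then show ?thesis using conn by blast
  qed
qed

lemma indep: assumes j: "j \<in> VV" shows "lin_indep (VV - {j}) v"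
  unfolding lin_indep_def
proof (intro allI impI ballI)
  fix c i assume c0: "lincomb (VV - {j}) c v = (\<lambda>_. 0)" and i: "i \<in> VV - {j}"
  define c' where "c' = c(j := 0)"
  have "lincomb VV c' v = lincomb (VV - {j}) c' v"
  proof
    fix u
    have "lincomb VV c' v u = c' j * v j u + lincomb (VV - {j}) c' v u"
      unfolding lincomb_def using j by (simp add: sum.remove)
    then show "lincomb VV c' v u = lincomb (VV - {j}) c' v u" by (simp add: c'_def)
  qed
  also have "\<dots> = lincomb (VV - {j}) c v" by (rule lincomb_cong) (auto simp: c'_def)
  finally have lc0: "lincomb VV c' v = (\<lambda>_. 0)" using c0 by simp
  define T where "T s t = pp s t * ((c' s - c' t) * (c' s - c' t))" for s t
  have "2 * dot r (lincomb VV c' v) (lincomb VV c' v) = 0" using lc0 by (simp add: dot_def)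
  then have "(\<Sum>s\<in>VV. \<Sum>t\<in>VV. - pp s t * ((c' s - c' t) * (c' s - c' t))) = 0" using bil[of c' c'] by simp
  then have "(\<Sum>s\<in>VV. \<Sum>t\<in>VV. T s t) = 0" by (simp add: T_def sum_negf)
  moreover have Tle: "\<And>s t. s \<in> VV \<Longrightarrow> t \<in> VV \<Longrightarrow> T s t \<le> 0"
  proof -
    fix s t assume st: "s \<in> VV" "t \<in> VV"
    show "T s t \<le> 0"
    proof (cases "s = t")
      case True then show ?thesis by (simp add: T_def)
    next
      case False
      then have "pp s t \<le> 0" using pneg st by simp
      then show ?thesis unfolding T_def by (simp add: mult_nonpos_nonneg)
    qed
  qed
  ultimately have Z: "\<And>s t. s \<in> VV \<Longrightarrow> t \<in> VV \<Longrightarrow> T s t = 0"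
    by (intro double_sum_nonpos_zero[of VV T]) auto
  have same: "\<And>s t. s \<in> VV \<Longrightarrow> t \<in> VV \<Longrightarrow> pp s t \<noteq> 0 \<Longrightarrow> c' s = c' t"
  proof -
    fix s t assume st: "s \<in> VV" "t \<in> VV" "pp s t \<noteq> 0"
    then have "pp s t * ((c' s - c' t) * (c' s - c' t)) = 0" using Z[of s t] by (simp add: T_def)
    then have "(c' s - c' t) * (c' s - c' t) = 0" using st(3) by (metis mult_eq_0_iff)
    then have "c' s - c' t = 0" by (metis mult_eq_0_iff)
    then show "c' s = c' t" by simp
  qed
  show "c i = 0"
  proof (rule ccontr)
    assume ci: "c i \<noteq> 0"
    define C where "C = {s \<in> VV. c' s = c' i}"
    have "c' i = c i" using i by (simp add: c'_def)
    have "disc C" unfolding disc_def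
    proof (intro conjI ballI)
      show "C \<subseteq> VV" by (auto simp: C_def)
      show "C \<noteq> {}" using i by (auto simp: C_def)
      have "c' j = 0" by (simp add: c'_def)
      then have "j \<notin> C" using ci \<open>c' i = c i\<close> by (simp add: C_def)
      then show "C \<noteq> VV" using j by blast
      fix s t assume s: "s \<in> C" and t: "t \<in> VV - C"
      then have "c' s \<noteq> c' t" "s \<in> VV" "t \<in> VV" by (auto simp: C_def)
      then show "pp s t = 0" using same[of s t] by blast
    qed
    then show False using conn by blast
  qed
qed

lemma spans_rest: assumes j: "j \<in> VV" shows "spans LL (VV - {j}) v"
  unfolding spans_def
proof (intro conjI ballI)
  fix i assume "i \<in> VV - {j}" then show "v i \<in> LL" using vL by auto
next
  fix w assume "w \<in> LL"
  then obtain c where c: "w = lincomb VV c v" using vspan by blast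
  have "lincomb VV c v = lincomb (VV - {j}) (\<lambda>i. c i - c j) v"
  proof
    fix u
    have "(\<Sum>s\<in>VV. (c s - c j) * v s u) + c j * (\<Sum>s\<in>VV. v s u) = (\<Sum>s\<in>VV. (c s - c j) * v s u + c j * v s u)"
      by (simp add: sum.distrib sum_distrib_left)
    also have "\<dots> = lincomb VV c v u" by (simp add: lincomb_def algebra_simps)
    finally have "lincomb VV c v u = (\<Sum>s\<in>VV. (c s - c j) * v s u) + c j * (\<Sum>s\<in>VV. v s u)" by simp
    also have "\<dots> = (\<Sum>s\<in>VV. (c s - c j) * v s u)" by (simp add: vsum)
    also have "\<dots> = (\<Sum>s\<in>VV - {j}. (c s - c j) * v s u)"
      using j by (intro sum.mono_neutral_right) auto
    finally show "lincomb VV c v u = lincomb (VV - {j}) (\<lambda>i. c i - c j) v u" by (simp add: lincomb_def)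
  qed
  then show "\<exists>c. w = lincomb (VV - {j}) c v" using c by blast
qed

end


context SB
begin

definition spn :: "nat set \<Rightarrow> (nat \<Rightarrow> int) set" where
  "spn X = {x. \<exists>c. x = lincomb X c v}"

lemma spn_in: "lincomb X c v \<in> spn X" by (auto simp: spn_def)

lemma spn_L: "X \<subseteq> VV \<Longrightarrow> x \<in> spn X \<Longrightarrow> x \<in> LL"
proof -
  assume X: "X \<subseteq> VV" and "x \<in> spn X"
  then obtain c where c: "x = lincomb X c v" by (auto simp: spn_def)
  have "finite X" using X finite_subset by blast
  moreover have "\<And>i. i \<in> X \<Longrightarrow> v i \<in> LL" using vL X by blast
  ultimately show "x \<in> LL" unfolding c by (rule lincomb_in_perp)
qed

lemma spn_add: "x \<in> spn X \<Longrightarrow> y \<in> spn X \<Longrightarrow> (\<lambda>t. x t + y t) \<in> spn X"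
proof -
  assume "x \<in> spn X" "y \<in> spn X"
  then obtain a b where ab: "x = lincomb X a v" "y = lincomb X b v" by (auto simp: spn_def)
  show ?thesis unfolding ab lincomb_add by (rule spn_in)
qed

lemma spn_diff: "x \<in> spn X \<Longrightarrow> y \<in> spn X \<Longrightarrow> (\<lambda>t. x t - y t) \<in> spn X"
proof -
  assume "x \<in> spn X" "y \<in> spn X"
  then obtain a b where ab: "x = lincomb X a v" "y = lincomb X b v" by (auto simp: spn_def)
  show ?thesis unfolding ab lincomb_diff by (rule spn_in)
qed

lemma spn_scale: "x \<in> spn X \<Longrightarrow> (\<lambda>t. k * x t) \<in> spn X"
proof -
  assume "x \<in> spn X"
  then obtain a where ab: "x = lincomb X a v" by (auto simp: spn_def)
  show ?thesis unfolding ab lincomb_scale by (rule spn_in)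
qed

lemma spn_zero: "(\<lambda>_. 0) \<in> spn X"
  using spn_in[of X "\<lambda>_. 0"] by (simp only: lincomb_zero_coeff)

lemma spn_lc: "finite I \<Longrightarrow> (\<And>q. q \<in> I \<Longrightarrow> g q \<in> spn X) \<Longrightarrow> lincomb I c g \<in> spn X"
proof (induction I rule: finite_induct)
  case empty then show ?case using spn_zero by (simp add: lincomb_def)
next
  case (insert q I)
  then have "(\<lambda>t. c q * g q t + lincomb I c g t) \<in> spn X"
    by (intro spn_add spn_scale) auto
  then show ?case using insert by (simp add: lincomb_insert)
qed

lemma spn_v: "a \<in> X \<Longrightarrow> finite X \<Longrightarrow> v a \<in> spn X"
  using lincomb_delta[of a X] spn_in[of X "\<lambda>s. of_bool (s = a)"] by simp

definition cut :: "nat \<Rightarrow> nat set \<Rightarrow> nat set \<Rightarrow> bool" where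
  "cut i A B \<longleftrightarrow> i \<in> VV \<and> A \<union> B = VV - {i} \<and> A \<inter> B = {} \<and> A \<noteq> {} \<and> B \<noteq> {} \<and> (\<forall>a\<in>A. \<forall>b\<in>B. pp a b = 0)"

lemma cut_sym: assumes "cut i A B" shows "cut i B A"
proof -
  have "\<forall>a\<in>B. \<forall>b\<in>A. pp a b = 0" using assms unfolding cut_def by (metis dot_sym)
  moreover have "i \<in> VV" "B \<union> A = VV - {i}" "B \<inter> A = {}" "B \<noteq> {}" "A \<noteq> {}"
    using assms unfolding cut_def by blast+
  ultimately show ?thesis unfolding cut_def by blast
qed

lemma bad_cut: "bad i \<Longrightarrow> i \<in> VV \<Longrightarrow> \<exists>A B. cut i A B"
proof -
  assume "bad i" "i \<in> VV"
  then obtain A B where "A \<union> B = VV - {i}" "A \<inter> B = {}" "A \<noteq> {}" "B \<noteq> {}" "\<forall>a\<in>A. \<forall>b\<in>B. pp a b = 0"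
    unfolding bad_def by blast
  then have "cut i A B" unfolding cut_def using \<open>i \<in> VV\<close> by blast
  then show ?thesis by blast
qed

context
  fixes i A B assumes ct: "cut i A B"
begin

lemma c_i: "i \<in> VV" using ct by (simp add: cut_def)
lemma c_sub: "A \<subseteq> VV" "B \<subseteq> VV" using ct by (auto simp: cut_def)
lemma c_fin: "finite A" "finite B" using c_sub finite_subset by blast+
lemma c_ne: "A \<noteq> {}" "B \<noteq> {}" using ct by (auto simp: cut_def)
lemma c_disj: "A \<inter> B = {}" "i \<notin> A" "i \<notin> B" using ct by (auto simp: cut_def)
lemma c_un: "VV = insert i (A \<union> B)" using ct by (auto simp: cut_def)
lemma c_un2: "A \<union> B = VV - {i}" using ct by (simp add: cut_def)
lemma c_pp: "a \<in> A \<Longrightarrow> b \<in> B \<Longrightarrow> pp a b = 0" using ct by (auto simp: cut_def)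

lemma c_split: "(\<Sum>s\<in>VV. f s) = f i + (\<Sum>s\<in>A. f s) + (\<Sum>s\<in>B. (f s :: int))"
proof -
  have "(\<Sum>s\<in>VV. f s) = f i + (\<Sum>s\<in>A \<union> B. f s)"
    unfolding c_un using c_fin c_disj by (subst sum.insert) auto
  also have "(\<Sum>s\<in>A \<union> B. f s) = (\<Sum>s\<in>A. f s) + (\<Sum>s\<in>B. f s)"
    using c_fin c_disj by (intro sum.union_disjoint) auto
  finally show ?thesis by simp
qed

lemma c_orth: "x \<in> spn A \<Longrightarrow> y \<in> spn B \<Longrightarrow> dot r x y = 0"
  unfolding spn_def using c_pp by (auto simp: dot_lc_lc intro!: sum.neutral)

lemma c_inter: "x \<in> spn A \<Longrightarrow> x \<in> spn B \<Longrightarrow> x = (\<lambda>_. 0)"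
proof -
  assume a: "x \<in> spn A" "x \<in> spn B"
  then have "dot r x x = 0" using c_orth by blast
  moreover have "x \<in> zvec r" using spn_L[OF c_sub(1) a(1)] by (simp add: perp_lattice_def)
  ultimately show ?thesis using dot_self_zero by blast
qed

lemma c_vs: "v i u + lincomb A (\<lambda>_. 1) v u + lincomb B (\<lambda>_. 1) v u = 0"
  using vsum[of u] c_split[of "\<lambda>s. v s u"] by (simp add: lincomb_def)

lemma c_dec: "x \<in> LL \<Longrightarrow> \<exists>p q. p \<in> spn A \<and> q \<in> spn B \<and> x = (\<lambda>t. p t + q t)"
proof -
  assume "x \<in> LL"
  then obtain c where c: "x = lincomb VV c v" using vspan by blast
  define c' where "c' s = c s - c i" for s
  have "x = (\<lambda>t. lincomb A c' v t + lincomb B c' v t)"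
  proof
    fix u
    have "(\<Sum>s\<in>VV. c' s * v s u) + c i * (\<Sum>s\<in>VV. v s u) = (\<Sum>s\<in>VV. c' s * v s u + c i * v s u)"
      by (simp add: sum.distrib sum_distrib_left)
    also have "\<dots> = x u" by (simp add: c lincomb_def c'_def algebra_simps)
    finally have "x u = (\<Sum>s\<in>VV. c' s * v s u)" using vsum[of u] by simp
    also have "\<dots> = c' i * v i u + (\<Sum>s\<in>A. c' s * v s u) + (\<Sum>s\<in>B. c' s * v s u)" by (rule c_split)
    finally show "x u = lincomb A c' v u + lincomb B c' v u" by (simp add: c'_def lincomb_def)
  qed
  then show ?thesis using spn_in by blast
qed

lemma c_side: "w \<in> LL \<Longrightarrow> irreducible_vec r LL w \<Longrightarrow> w \<in> spn A \<or> w \<in> spn B"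
proof -
  assume wL: "w \<in> LL" and irr: "irreducible_vec r LL w"
  obtain p q where pq: "p \<in> spn A" "q \<in> spn B" "w = (\<lambda>t. p t + q t)" using c_dec[OF wL] by blast
  show ?thesis
  proof (cases "p = (\<lambda>_. 0)")
    case True then show ?thesis using pq by simp
  next
    case pnz: False
    show ?thesis
    proof (cases "q = (\<lambda>_. 0)")
      case True then show ?thesis using pq by simp
    next
      case False
      have "p \<in> LL" "q \<in> LL" using spn_L c_sub pq by blast+
      then have "dot r p q \<le> -1" using irr pnz False pq unfolding irreducible_vec_def by blast
      moreover have "dot r p q = 0" using c_orth pq by blast
      ultimately show ?thesis by simp
    qed
  qed
qed

lemma c_W: "1 \<le> t \<Longrightarrow> t < r \<Longrightarrow> (W t \<in> spn A \<longleftrightarrow> W t \<notin> spn B)"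
proof -
  assume t: "1 \<le> t" "t < r"
  have "W t \<in> spn A \<or> W t \<in> spn B" using c_side W_L W_irr t by blast
  moreover have "\<not> (W t \<in> spn A \<and> W t \<in> spn B)"
  proof
    assume "W t \<in> spn A \<and> W t \<in> spn B"
    then have "W t = (\<lambda>_. 0)" using c_inter by blast
    then show False using W_t[OF t] by (metis zero_neq_one)
  qed
  ultimately show ?thesis by blast
qed

lemma c_all: "(\<And>t. 1 \<le> t \<Longrightarrow> t < r \<Longrightarrow> W t \<in> spn X) \<Longrightarrow> LL \<subseteq> spn X"
proof
  fix x assume H: "\<And>t. 1 \<le> t \<Longrightarrow> t < r \<Longrightarrow> W t \<in> spn X" and x: "x \<in> LL"
  obtain c where "x = lincomb {1..r-1} c W" using LL_span_W x by blast
  moreover have "lincomb {1..r-1} c W \<in> spn X" using H r2 by (intro spn_lc) auto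
  ultimately show "x \<in> spn X" by simp
qed

lemma c_resp: "\<And>s t. 1 \<le> s \<Longrightarrow> s < r \<Longrightarrow> 1 \<le> t \<Longrightarrow> t < r \<Longrightarrow> dot r (W s) (W t) \<noteq> 0 \<Longrightarrow>
    (W s \<in> spn A \<longleftrightarrow> W t \<in> spn A)"
proof -
  fix s t assume st: "1 \<le> s" "s < r" "1 \<le> t" "t < r" "dot r (W s) (W t) \<noteq> 0"
  show "W s \<in> spn A \<longleftrightarrow> W t \<in> spn A"
  proof
    assume "W s \<in> spn A"
    show "W t \<in> spn A"
    proof (rule ccontr)
      assume "W t \<notin> spn A"
      then have "W t \<in> spn B" using c_W st by blast
      then show False using c_orth \<open>W s \<in> spn A\<close> st by blast
    qed
  next
    assume "W t \<in> spn A"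
    show "W s \<in> spn A"
    proof (rule ccontr)
      assume "W s \<notin> spn A"
      then have "W s \<in> spn B" using c_W st by blast
      then have "dot r (W t) (W s) = 0" using c_orth \<open>W t \<in> spn A\<close> by blast
      then show False using st by (simp add: dot_sym)
    qed
  qed
qed

lemma c_nonconst: "(W T0 \<in> spn A) \<noteq> (W 1 \<in> spn A)"
proof
  assume eq: "(W T0 \<in> spn A) = (W 1 \<in> spn A)"
  note resp = c_resp
  have const: "\<And>t. 1 \<le> t \<Longrightarrow> t < r \<Longrightarrow> (W t \<in> spn A \<longleftrightarrow> W 1 \<in> spn A)"
    using two_class[of "\<lambda>t. W t \<in> spn A", OF resp eq] by blast
  have r1: "1 < r" using r2 by simp
  show False
  proof (cases "W 1 \<in> spn A")
    case True
    then have "LL \<subseteq> spn A" using const by (intro c_all) blast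
    obtain b where b: "b \<in> B" using c_ne by blast
    then have "v b \<in> spn B" using spn_v c_fin by blast
    moreover have "v b \<in> spn A" using \<open>LL \<subseteq> spn A\<close> vL b c_sub by blast
    ultimately have "v b = (\<lambda>_. 0)" using c_inter by blast
    then show False using v_nz b c_sub by blast
  next
    case False
    then have "\<And>t. 1 \<le> t \<Longrightarrow> t < r \<Longrightarrow> W t \<in> spn B" using const c_W by blast
    then have "LL \<subseteq> spn B" by (intro c_all) blast
    obtain a where a: "a \<in> A" using c_ne by blast
    then have "v a \<in> spn A" using spn_v c_fin by blast
    moreover have "v a \<in> spn B" using \<open>LL \<subseteq> spn B\<close> vL a c_sub by blast
    ultimately have "v a = (\<lambda>_. 0)" using c_inter by blast
    then show False using v_nz a c_sub by blast
  qed
qed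

end

lemma cut_oriented: "cut i A B \<Longrightarrow> \<exists>A' B'. cut i A' B' \<and> W 1 \<in> spn A' \<and> W T0 \<in> spn B'"
proof -
  assume ct: "cut i A B"
  have T: "1 \<le> T0" "T0 < r" using T0_range by auto
  have r1: "1 < r" using r2 by simp
  show ?thesis
  proof (cases "W 1 \<in> spn A")
    case True
    then have "W T0 \<notin> spn A" using c_nonconst[OF ct] by blast
    then have "W T0 \<in> spn B" using c_W[OF ct T] by blast
    then show ?thesis using ct True by blast
  next
    case False
    then have "W 1 \<in> spn B" using c_W[OF ct] r1 by auto
    moreover have "W T0 \<in> spn A" using c_nonconst[OF ct] False by blast
    ultimately show ?thesis using cut_sym[OF ct] by blast
  qed
qed

lemma zero_side:
  assumes ct: "cut j A B" and z: "lincomb A (\<lambda>_. 1) v = (\<lambda>_. 0)"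
  shows False
proof -
  have "(\<Sum>a\<in>A. pp j a) = dot r (v j) (lincomb A (\<lambda>_. 1) v)" by (simp add: dot_lincomb_right)
  also have "\<dots> = 0" using z by (simp add: dot_def)
  finally have s0: "(\<Sum>a\<in>A. pp j a) = 0" .
  have le: "\<And>a. a \<in> A \<Longrightarrow> pp j a \<le> 0" using pneg c_i[OF ct] c_sub[OF ct] c_disj[OF ct] by blast
  have zj: "\<And>a. a \<in> A \<Longrightarrow> pp j a = 0"
    using sum_nonpos_zero[of A "\<lambda>a. pp j a"] c_fin[OF ct] le s0 by auto
  have "disc A" unfolding disc_def
  proof (intro conjI ballI)
    show "A \<subseteq> VV" "A \<noteq> {}" using c_sub[OF ct] c_ne[OF ct] by auto
    show "A \<noteq> VV" using c_i[OF ct] c_disj[OF ct] by blast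
    fix a d assume a: "a \<in> A" and d: "d \<in> VV - A"
    show "pp a d = 0"
    proof (cases "d = j")
      case True then show ?thesis using zj[OF a] by (simp add: dot_sym)
    next
      case False
      then have "d \<in> B" using d c_un[OF ct] by blast
      then show ?thesis using c_pp[OF ct a] by blast
    qed
  qed
  then show False using conn by blast
qed

lemma two_bad: assumes i: "i \<in> VV" "bad i" and j: "j \<in> VV" "bad j" and ij: "i \<noteq> j" shows False
proof -
  obtain A B where ctA: "cut i A B" and A1: "W 1 \<in> spn A" and BT: "W T0 \<in> spn B"
    using bad_cut[OF i(2) i(1)] cut_oriented by blast
  obtain A' B' where ctA': "cut j A' B'" and A1': "W 1 \<in> spn A'" and BT': "W T0 \<in> spn B'"
    using bad_cut[OF j(2) j(1)] cut_oriented by blast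
  have T: "1 \<le> T0" "T0 < r" using T0_range by auto
  have r1: "1 < r" using r2 by simp
  have resp: "\<And>s t. 1 \<le> s \<Longrightarrow> s < r \<Longrightarrow> 1 \<le> t \<Longrightarrow> t < r \<Longrightarrow> dot r (W s) (W t) \<noteq> 0 \<Longrightarrow>
      ((W s \<in> spn A \<longleftrightarrow> W s \<in> spn A') \<longleftrightarrow> (W t \<in> spn A \<longleftrightarrow> W t \<in> spn A'))"
  proof -
    fix s t assume st: "1 \<le> s" "s < r" "1 \<le> t" "t < r" and nz: "dot r (W s) (W t) \<noteq> 0"
    have nz': "dot r (W t) (W s) \<noteq> 0" using nz by (simp add: dot_sym)
    have g: "W s \<in> spn A \<longleftrightarrow> W t \<in> spn A" by (rule c_resp[OF ctA st nz])
    have g': "W s \<in> spn A' \<longleftrightarrow> W t \<in> spn A'" by (rule c_resp[OF ctA' st nz])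
    show "(W s \<in> spn A \<longleftrightarrow> W s \<in> spn A') \<longleftrightarrow> (W t \<in> spn A \<longleftrightarrow> W t \<in> spn A')"
      using g g' by blast
  qed
  have "W T0 \<notin> spn A" using c_W[OF ctA T] BT by blast
  moreover have "W T0 \<notin> spn A'" using c_W[OF ctA' T] BT' by blast
  ultimately have eq: "(W T0 \<in> spn A \<longleftrightarrow> W T0 \<in> spn A') = (W 1 \<in> spn A \<longleftrightarrow> W 1 \<in> spn A')"
    using A1 A1' by blast
  have align: "\<And>t. 1 \<le> t \<Longrightarrow> t < r \<Longrightarrow> (W t \<in> spn A \<longleftrightarrow> W t \<in> spn A')"
    using two_class[of "\<lambda>t. W t \<in> spn A \<longleftrightarrow> W t \<in> spn A'", OF resp eq] A1 A1' by blast
  have alignB: "\<And>t. 1 \<le> t \<Longrightarrow> t < r \<Longrightarrow> (W t \<in> spn B \<longleftrightarrow> W t \<in> spn B')"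
    using align c_W[OF ctA] c_W[OF ctA'] by blast
  have sub: "\<And>x. (x \<in> spn A' \<longrightarrow> x \<in> spn A) \<and> (x \<in> spn B' \<longrightarrow> x \<in> spn B)"
  proof -
    fix x
    show "(x \<in> spn A' \<longrightarrow> x \<in> spn A) \<and> (x \<in> spn B' \<longrightarrow> x \<in> spn B)"
    proof (intro conjI impI)
      assume xA': "x \<in> spn A'"
      then have "x \<in> LL" using spn_L c_sub[OF ctA'] by blast
      then obtain c where c: "x = lincomb {1..r-1} c W" using LL_span_W by blast
      define IA where "IA = {t \<in> {1..r-1}. W t \<in> spn A}"
      define IB where "IB = {t \<in> {1..r-1}. W t \<notin> spn A}"
      have xdec: "x = (\<lambda>u. lincomb IA c W u + lincomb IB c W u)"
      proof
        fix u
        have e: "{1..r-1} = IA \<union> IB" by (auto simp: IA_def IB_def)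
        have "(\<Sum>q\<in>IA \<union> IB. c q * W q u) = (\<Sum>q\<in>IA. c q * W q u) + (\<Sum>q\<in>IB. c q * W q u)"
          by (rule sum.union_disjoint) (auto simp: IA_def IB_def)
        then show "x u = lincomb IA c W u + lincomb IB c W u"
          unfolding c lincomb_def e by simp
      qed
      moreover have pA: "lincomb IA c W \<in> spn A" by (intro spn_lc) (auto simp: IA_def)
      moreover have pA': "lincomb IA c W \<in> spn A'" using align r2 by (intro spn_lc) (auto simp: IA_def)
      moreover have qB: "lincomb IB c W \<in> spn B" using c_W[OF ctA] r2 by (intro spn_lc) (auto simp: IB_def)
      moreover have qB': "lincomb IB c W \<in> spn B'" using alignB c_W[OF ctA] r2 by (intro spn_lc) (auto simp: IB_def)
      have "(\<lambda>u. x u - lincomb IA c W u) \<in> spn A'" by (rule spn_diff[OF xA' pA'])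
      moreover have "(\<lambda>u. x u - lincomb IA c W u) = lincomb IB c W"
        using xdec by (simp add: fun_eq_iff)
      ultimately have "lincomb IB c W = (\<lambda>_. 0)" using c_inter[OF ctA'] qB' by simp
      then show "x \<in> spn A" using xdec pA by simp
    next
      assume xB': "x \<in> spn B'"
      then have "x \<in> LL" using spn_L c_sub[OF ctA'] by blast
      then obtain c where c: "x = lincomb {1..r-1} c W" using LL_span_W by blast
      define IA where "IA = {t \<in> {1..r-1}. W t \<in> spn A}"
      define IB where "IB = {t \<in> {1..r-1}. W t \<notin> spn A}"
      have xdec: "x = (\<lambda>u. lincomb IA c W u + lincomb IB c W u)"
      proof
        fix u
        have e: "{1..r-1} = IA \<union> IB" by (auto simp: IA_def IB_def)
        have "(\<Sum>q\<in>IA \<union> IB. c q * W q u) = (\<Sum>q\<in>IA. c q * W q u) + (\<Sum>q\<in>IB. c q * W q u)"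
          by (rule sum.union_disjoint) (auto simp: IA_def IB_def)
        then show "x u = lincomb IA c W u + lincomb IB c W u"
          unfolding c lincomb_def e by simp
      qed
      moreover have pA': "lincomb IA c W \<in> spn A'" using align r2 by (intro spn_lc) (auto simp: IA_def)
      moreover have qB: "lincomb IB c W \<in> spn B" using c_W[OF ctA] r2 by (intro spn_lc) (auto simp: IB_def)
      moreover have qB': "lincomb IB c W \<in> spn B'" using alignB c_W[OF ctA] r2 by (intro spn_lc) (auto simp: IB_def)
      have "(\<lambda>u. x u - lincomb IB c W u) \<in> spn B'" by (rule spn_diff[OF xB' qB'])
      moreover have "(\<lambda>u. x u - lincomb IB c W u) = lincomb IA c W"
        using xdec by (simp add: fun_eq_iff)
      ultimately have "lincomb IA c W = (\<lambda>_. 0)" using c_inter[OF ctA'] pA' by simp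
      then show "x \<in> spn B" using xdec qB by simp
    qed
  qed
  define vA' where "vA' = lincomb A' (\<lambda>_. 1) v"
  define vB' where "vB' = lincomb B' (\<lambda>_. 1) v"
  have "vA' \<in> spn A'" unfolding vA'_def by (rule spn_in)
  then have vA'A: "vA' \<in> spn A" using sub[of vA'] by blast
  have "vB' \<in> spn B'" unfolding vB'_def by (rule spn_in)
  then have vB'B: "vB' \<in> spn B" using sub[of vB'] by blast
  have vj: "\<And>u. v j u + vA' u + vB' u = 0" using c_vs[OF ctA'] by (simp add: vA'_def vB'_def)
  have "j \<in> VV - {i}" using j ij by simp
  then have "j \<in> A \<union> B" by (simp only: c_un2[OF ctA])
  then show False
  proof
    assume jA: "j \<in> A"
    then have "v j \<in> spn A" using spn_v c_fin[OF ctA] by blast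
    then have "(\<lambda>u. - v j u - vA' u) \<in> spn A"
      using spn_diff[OF spn_scale[of "v j" A "-1"] vA'A] by simp
    moreover have "(\<lambda>u. - v j u - vA' u) = vB'"
    proof
      fix u have "v j u + vA' u + vB' u = 0" by (rule vj)
      then show "- v j u - vA' u = vB' u" by simp
    qed
    ultimately have "vB' = (\<lambda>_. 0)" using c_inter[OF ctA] vB'B by simp
    then show False using zero_side[OF cut_sym[OF ctA']] by (simp add: vB'_def)
  next
    assume jB: "j \<in> B"
    then have "v j \<in> spn B" using spn_v c_fin[OF ctA] by blast
    then have "(\<lambda>u. - v j u - vB' u) \<in> spn B"
      using spn_diff[OF spn_scale[of "v j" B "-1"] vB'B] by simp
    moreover have "(\<lambda>u. - v j u - vB' u) = vA'"
    proof
      fix u have "v j u + vA' u + vB' u = 0" by (rule vj)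
      then show "- v j u - vB' u = vA' u" by simp
    qed
    ultimately have "vA' = (\<lambda>_. 0)" using c_inter[OF ctA] vA'A by simp
    then show False using zero_side[OF ctA'] by (simp add: vA'_def)
  qed
qed

end


context SB
begin

lemma main:
  shows "card {i. i \<le> r - 1 \<and> reducible_vec r (perp_lattice r \<sigma>) (v i)} \<le> 1 \<and>
    (\<exists>j\<le>r - 1. (\<forall>i\<le>r - 1. i \<noteq> j \<longrightarrow> irreducible_vec r (perp_lattice r \<sigma>) (v i)) \<and>
        is_basis (perp_lattice r \<sigma>) ({..r - 1} - {j}) v)"
proof -
  have iff: "\<And>i. i \<le> r - 1 \<longleftrightarrow> i \<in> VV" using r2 by auto
  have red_imp: "\<And>i. i \<in> VV \<Longrightarrow> reducible_vec r LL (v i) \<Longrightarrow> bad i"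
  proof -
    fix i assume i: "i \<in> VV" and red: "reducible_vec r LL (v i)"
    then have "\<not> irreducible_vec r LL (v i)" "v i \<in> LL" "v i \<noteq> (\<lambda>_. 0)" by (auto simp: reducible_vec_def)
    then obtain x y where xy: "x \<in> LL" "y \<in> LL" "x \<noteq> (\<lambda>_. 0)" "y \<noteq> (\<lambda>_. 0)" "v i = (\<lambda>t. x t + y t)"
      "\<not> dot r x y \<le> -1"
      unfolding irreducible_vec_def by blast
    then show "bad i" using red_bad[OF i] by simp
  qed
  have irr_of: "\<And>i. i \<in> VV \<Longrightarrow> \<not> bad i \<Longrightarrow> irreducible_vec r LL (v i)"
  proof -
    fix i assume i: "i \<in> VV" and nb: "\<not> bad i"
    show "irreducible_vec r LL (v i)"
      unfolding irreducible_vec_def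
    proof (intro conjI ballI impI)
      show "v i \<in> LL" using vL i by blast
      show "v i \<noteq> (\<lambda>_. 0)" using v_nz i by blast
      fix x y assume "x \<in> LL" "y \<in> LL" and H: "x \<noteq> (\<lambda>_. 0) \<and> y \<noteq> (\<lambda>_. 0) \<and> v i = (\<lambda>t. x t + y t)"
      show "dot r x y \<le> -1"
      proof (rule ccontr)
        assume "\<not> dot r x y \<le> -1"
        then have "0 \<le> dot r x y" by simp
        then have "bad i" using red_bad[OF i \<open>x \<in> LL\<close> \<open>y \<in> LL\<close>] H by blast
        then show False using nb by blast
      qed
    qed
  qed
  have uniq: "\<And>a b. a \<in> VV \<Longrightarrow> bad a \<Longrightarrow> b \<in> VV \<Longrightarrow> bad b \<Longrightarrow> a = b"
    using two_bad by blast
  have part1: "card {i. i \<le> r - 1 \<and> reducible_vec r LL (v i)} \<le> 1"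
  proof -
    have fin: "finite {i. i \<le> r - 1 \<and> reducible_vec r LL (v i)}" by simp
    have "\<forall>a\<in>{i. i \<le> r - 1 \<and> reducible_vec r LL (v i)}. \<forall>b\<in>{i. i \<le> r - 1 \<and> reducible_vec r LL (v i)}. a = b"
      using uniq red_imp iff by blast
    then show ?thesis using card_le_Suc0_iff_eq[OF fin] by simp
  qed
  obtain j where j: "j \<in> VV" and jb: "\<And>i. i \<in> VV \<Longrightarrow> i \<noteq> j \<Longrightarrow> \<not> bad i"
  proof (cases "\<exists>j0\<in>VV. bad j0")
    case True
    then obtain j0 where "j0 \<in> VV" "bad j0" by blast
    then show ?thesis using that uniq by blast
  next
    case False
    then show ?thesis using that[of 0] r2 by auto
  qed
  have "\<forall>i\<le>r - 1. i \<noteq> j \<longrightarrow> irreducible_vec r LL (v i)"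
    using irr_of jb iff by blast
  moreover have "is_basis LL ({..r - 1} - {j}) v"
    unfolding is_basis_def Veq using spans_rest[OF j] indep[OF j] by blast
  moreover have "j \<le> r - 1" using j iff by blast
  ultimately show ?thesis using part1 by blast
qed

end

theorem lemma4p5:
  fixes r :: nat and \<sigma> :: "nat \<Rightarrow> int" and v :: "nat \<Rightarrow> nat \<Rightarrow> int"
  assumes "changemaker r \<sigma>"
    and "\<sigma> (r - 1) \<ge> 2"
    and "obtuse_superbase r (perp_lattice r \<sigma>) (r - 1) v"
  shows "card {i. i \<le> r - 1 \<and> reducible_vec r (perp_lattice r \<sigma>) (v i)} \<le> 1 \<and>
    (\<exists>j\<le>r - 1. (\<forall>i\<le>r - 1. i \<noteq> j \<longrightarrow> irreducible_vec r (perp_lattice r \<sigma>) (v i)) \<and>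
        is_basis (perp_lattice r \<sigma>) ({..r - 1} - {j}) v)"
proof -
  have "2 \<le> r"
  proof (rule ccontr)
    assume "\<not> 2 \<le> r"
    then have "r - 1 = 0" by simp
    then have "\<sigma> (r - 1) = 1" using assms(1) by (simp add: changemaker_def)
    then show False using assms(2) by simp
  qed
  then interpret SB r \<sigma> v using assms by unfold_locales auto
  show ?thesis by (rule main)
qed


end
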